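(* Let $\triangle PQR$ be a triangle contained in $D$ with $\delta(P,Q,R)>\Delta'(P,Q)$. Then there exists $w\in S^1$ such that for every $w'\in\pi^{-1}(w)$, $\overline{\psi_{\triangle PQR}}^{\,3}(w')<w'+1$.
   Context: $D$ is the open unit disk in $\mathbb{R}^2$ (Beltrami–Klein model) and $S^1$ its boundary, identified with $\mathbb{R}/\mathbb{Z}$ via $t\mapsto(\cos2\pi t,\sin2\pi t)$; $\pi:\mathbb{R}\to S^1$, $\pi(x)=x-\lfloor x\rfloor$. For $P,Q\in D$ with chord endpoints $v_1,v_2\in S^1$, $d'(P,Q)=\frac12\left|\log\frac{|v_1Q||v_2P|}{|v_1P||v_2Q|}\right|$, $\Delta'(P,Q)=\log\frac{e^{d'(P,Q)}+1}{e^{d'(P,Q)}-1}$, and $\delta(P,Q,R)$ is the minimum of $d'(R,S)$ over points $S\in D$ on the line $PQ$. For a (non-degenerate, closed) triangle $\triangle PQR\subset D$ and $v\in S^1$, there are exactly two chords $vv_1,vv_2$ of $S^1$ whose lines support $\triangle PQR$; with $v_1$ the one reached first moving counterclockwise from $v$, set $\psi_{\triangle PQR}(v):=v_1$ (a homeomorphism of $S^1$). $\overline{\psi_{\triangle PQR}}$ is its lift to $\mathbb{R}$ with $\overline{\psi_{\triangle PQR}}(0)\in(0,1)$. *)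

theory Defs
  imports "HOL-Analysis.Analysis"
begin

text \<open>The plane R^2 is identified with the complex numbers. D is the open unit disk
(Beltrami--Klein model), S^1 = sphere 0 1 its boundary.\<close>

definition KD :: "complex set" where
  "KD = ball 0 1"

definition S1 :: "complex set" where
  "S1 = sphere 0 1"

text \<open>Identification of R/Z with S^1: t maps to (cos 2 pi t, sin 2 pi t).\<close>
definition circ :: "real \<Rightarrow> complex" where
  "circ t = cis (2 * pi * t)"

definition chord_ends :: "complex \<Rightarrow> complex \<Rightarrow> complex \<times> complex" where
  "chord_ends P Q = (SOME (v1, v2). v1 \<in> S1 \<and> v2 \<in> S1 \<and> v1 \<noteq> v2 \<and>
                       {P, Q} \<subseteq> affine hull {v1, v2})"

definition dprime :: "complex \<Rightarrow> complex \<Rightarrow> real" where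
  "dprime P Q = (case chord_ends P Q of (v1, v2) \<Rightarrow>
     \<bar>ln ((cmod (Q - v1) * cmod (P - v2)) / (cmod (P - v1) * cmod (Q - v2)))\<bar> / 2)"

definition Deltaprime :: "complex \<Rightarrow> complex \<Rightarrow> real" where
  "Deltaprime P Q = ln ((exp (dprime P Q) + 1) / (exp (dprime P Q) - 1))"

definition delta :: "complex \<Rightarrow> complex \<Rightarrow> complex \<Rightarrow> real" where
  "delta P Q R = Inf {dprime R S | S. S \<in> KD \<and> S \<in> affine hull {P, Q}}"

definition cross :: "complex \<Rightarrow> complex \<Rightarrow> real" where
  "cross a b = Im (cnj a * b)"

definition supports :: "complex \<Rightarrow> complex \<Rightarrow> complex set \<Rightarrow> bool" where
  "supports v w T \<longleftrightarrow> (\<exists>z\<in>T. cross (w - v) (z - v) = 0) \<and>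
     ((\<forall>z\<in>T. cross (w - v) (z - v) \<ge> 0) \<or> (\<forall>z\<in>T. cross (w - v) (z - v) \<le> 0))"

definition ccw_dist :: "complex \<Rightarrow> complex \<Rightarrow> real" where
  "ccw_dist v w = frac (Arg (w / v) / (2 * pi))"

definition psi_tri :: "complex set \<Rightarrow> complex \<Rightarrow> complex" where
  "psi_tri T v = (THE w. w \<in> S1 \<and> w \<noteq> v \<and> supports v w T \<and>
      (\<forall>w'. w' \<in> S1 \<and> w' \<noteq> v \<and> supports v w' T \<longrightarrow> ccw_dist v w \<le> ccw_dist v w'))"

definition psi_lift :: "complex set \<Rightarrow> real \<Rightarrow> real" where
  "psi_lift T = (THE f. continuous_on UNIV f \<and> (\<forall>x. circ (f x) = psi_tri T (circ x)) \<and>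
                        0 < f 0 \<and> f 0 < 1)"

end

theory Submission
  imports Defs
begin


lemma cross_alt: "cross a b = Re a * Im b - Im a * Re b"
  by (simp add: cross_def)

lemma cmod_sq: "(cmod z)^2 = (Re z)^2 + (Im z)^2"
  by (simp add: cmod_def)

lemma Re_cnj_mult: "Re (cnj a * b) = Re a * Re b + Im a * Im b"
  by simp

lemma unit_iff: "cmod v = 1 \<longleftrightarrow> (Re v)^2 + (Im v)^2 = 1"
  by (metis cmod_sq norm_ge_zero one_power2 power2_eq_imp_eq zero_le_one)

lemma disk_iff: "cmod v < 1 \<longleftrightarrow> (Re v)^2 + (Im v)^2 < 1"
proof -
  have "cmod v < 1 \<longleftrightarrow> (cmod v)^2 < 1"
    by (metis abs_norm_cancel abs_square_less_1)
  then show ?thesis by (simp add: cmod_sq)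
qed

lemma cdisk_iff: "cmod v \<le> 1 \<longleftrightarrow> (Re v)^2 + (Im v)^2 \<le> 1"
  by (metis disk_iff unit_iff order_le_less)

lemma norm_sq_line:
  "(cmod (c + of_real l * d))^2 = (cmod c)^2 + 2 * l * Re (cnj c * d) + l^2 * (cmod d)^2"
  unfolding cmod_sq by (simp add: power2_eq_square algebra_simps)

lemma cross_zero_param:
  assumes "d \<noteq> 0" "cross d e = 0"
  shows "e = of_real (Re (cnj d * e) / (cmod d)^2) * d"
proof -
  have D: "(Re d)^2 + (Im d)^2 \<noteq> 0" using assms(1)
    by (metis cmod_sq zero_eq_power2 norm_eq_zero)
  have c: "Re d * Im e = Im d * Re e" using assms(2) by (simp add: cross_alt)
  have 1: "Re e = (Re d * Re e + Im d * Im e) / ((Re d)^2 + (Im d)^2) * Re d"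
    using D c by (simp add: field_simps power2_eq_square)
  have 2: "Im e = (Re d * Re e + Im d * Im e) / ((Re d)^2 + (Im d)^2) * Im d"
    using D c by (simp add: field_simps power2_eq_square)
  show ?thesis unfolding cmod_sq using 1 2 by (simp add: complex_eq_iff)
qed

lemma xcross_scale_left: "cross (of_real a * d) e = a * cross d e"
  by (simp add: cross_alt algebra_simps)
lemma xcross_scale_right: "cross d (of_real a * e) = a * cross d e"
  by (simp add: cross_alt algebra_simps)
lemma xcross_antisym: "cross d e = - cross e d"
  by (simp add: cross_alt)
lemma xcross_add_left: "cross (a + b) e = cross a e + cross b e"
  by (simp add: cross_alt algebra_simps)
lemma xcross_add_right: "cross e (a + b) = cross e a + cross e b"
  by (simp add: cross_alt algebra_simps)
lemma xcross_diff_left: "cross (a - b) e = cross a e - cross b e"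
  by (simp add: cross_alt algebra_simps)
lemma xcross_diff_right: "cross e (a - b) = cross e a - cross e b"
  by (simp add: cross_alt algebra_simps)
lemma xcross_self: "cross a a = 0"
  by (simp add: cross_alt)

definition tpar :: "complex \<Rightarrow> complex \<Rightarrow> real" where
  "tpar X v = 2 * (1 - Re (cnj v * X)) / (cmod (X - v))^2"

definition sec :: "complex \<Rightarrow> complex \<Rightarrow> complex" where
  "sec X v = v + of_real (tpar X v) * (X - v)"

lemma tpar_gt1:
  assumes "cmod X < 1" "cmod v = 1"
  shows "tpar X v > 1"
proof -
  have ne: "X \<noteq> v" using assms by auto
  have pos: "(cmod (X - v))^2 > 0" using ne by simp
  have v2: "(Re v)^2 + (Im v)^2 = 1" using assms(2) unit_iff by blast
  have X2: "(Re X)^2 + (Im X)^2 < 1" using assms(1) disk_iff by blast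
  have "(cmod (X - v))^2 < 2 * (1 - Re (cnj v * X))"
    using v2 X2 by (simp add: cmod_sq power2_diff algebra_simps)
  then show ?thesis using pos by (simp add: tpar_def)
qed

lemma circle_line:
  assumes "cmod c = 1" "d \<noteq> 0"
  shows "cmod (c + of_real l * d) = 1 \<longleftrightarrow> l = 0 \<or> l = - 2 * Re (cnj c * d) / (cmod d)^2"
proof -
  have pos: "(cmod d)^2 > 0" using assms by simp
  have "cmod (c + of_real l * d) = 1 \<longleftrightarrow> (cmod (c + of_real l * d))^2 = 1"
    by (metis norm_ge_zero one_power2 power2_eq_imp_eq zero_le_one)
  also have "\<dots> \<longleftrightarrow> l * (2 * Re (cnj c * d) + l * (cmod d)^2) = 0"
    unfolding norm_sq_line using assms(1) by (simp add: power2_eq_square algebra_simps)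
  also have "\<dots> \<longleftrightarrow> l = 0 \<or> 2 * Re (cnj c * d) + l * (cmod d)^2 = 0"
    by simp
  also have "\<dots> \<longleftrightarrow> l = 0 \<or> l = - 2 * Re (cnj c * d) / (cmod d)^2"
    using pos by (auto simp: field_simps)
  finally show ?thesis .
qed

lemma sec_unit:
  assumes "cmod X < 1" "cmod v = 1"
  shows "cmod (sec X v) = 1"
proof -
  have ne: "X - v \<noteq> 0" using assms by auto
  have "Re (cnj v * v) = 1" using assms(2)
    by (metis Re_complex_of_real complex_norm_square mult.commute one_power2)
  then have "tpar X v = - 2 * Re (cnj v * (X - v)) / (cmod (X - v))^2"
    unfolding tpar_def by (simp add: algebra_simps)
  then show ?thesis unfolding sec_def using circle_line[OF assms(2) ne] by blast
qed

lemma sec_ne: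
  assumes "cmod X < 1" "cmod v = 1"
  shows "sec X v \<noteq> v"
  using tpar_gt1[OF assms] assms by (auto simp: sec_def)

lemma sec_X:
  assumes "cmod X < 1" "cmod v = 1"
  shows "X - v = of_real (1 / tpar X v) * (sec X v - v)"
  using tpar_gt1[OF assms] by (simp add: sec_def)

lemma sec_cross:
  assumes "cmod X < 1" "cmod v = 1"
  shows "cross (X - v) (sec X v - v) = 0"
  by (simp add: sec_def xcross_scale_right xcross_self)

lemma sec_unique:
  assumes "cmod X < 1" "cmod c = 1" "cmod u = 1" "u \<noteq> c" "cross (X - c) (u - c) = 0"
  shows "u = sec X c"
proof -
  have ne: "X - c \<noteq> 0" using assms by auto
  define l where "l = Re (cnj (X - c) * (u - c)) / (cmod (X - c))^2"
  have u: "u = c + of_real l * (X - c)"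
    using cross_zero_param[OF ne assms(5)] l_def by (metis add.commute diff_add_cancel)
  have "l \<noteq> 0" using u assms(4) by auto
  then have l: "l = - 2 * Re (cnj c * (X - c)) / (cmod (X - c))^2"
    using circle_line[OF assms(2) ne, of l] u assms(3) by auto
  have "Re (cnj c * c) = 1" using assms(2)
    by (metis Re_complex_of_real complex_norm_square mult.commute one_power2)
  then have "tpar X c = - 2 * Re (cnj c * (X - c)) / (cmod (X - c))^2"
    unfolding tpar_def by (simp add: algebra_simps)
  then show ?thesis using u l by (simp add: sec_def)
qed

lemma sec_invol:
  assumes "cmod X < 1" "cmod v = 1"
  shows "sec X (sec X v) = v"
proof -
  let ?w = "sec X v"
  have w: "cmod ?w = 1" by (rule sec_unit[OF assms])
  have "cross (X - ?w) (v - ?w) = 0"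
  proof -
    have "X - ?w = (X - v) - (?w - v)" by simp
    have "v - ?w = - (?w - v)" by simp
    have e: "?w - v = of_real (tpar X v) * (X - v)" by (simp add: sec_def)
    show ?thesis unfolding e
      by (simp add: cross_alt sec_def algebra_simps)
  qed
  from sec_unique[OF assms(1) w assms(2) sec_ne[OF assms, symmetric] this] show ?thesis by simp
qed

lemma continuous_on_sec:
  assumes "cmod X < 1"
  shows "continuous_on S1 (sec X)"
proof -
  have "continuous_on S1 (\<lambda>v. v + of_real (2 * (1 - Re (cnj v * X)) / (cmod (X - v))^2) * (X - v))"
    using assms by (intro continuous_intros) (auto simp: S1_def)
  then show ?thesis unfolding sec_def tpar_def by simp
qed



lemma circ_unit[simp]: "cmod (circ t) = 1"
  by (simp add: circ_def)

lemma circ_add: "circ (a + b) = circ a * circ b"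
  by (simp add: circ_def cis_mult distrib_left)

lemma circ_int:
  assumes "n \<in> \<int>" shows "circ (a + n) = circ a"
proof -
  have "cis (2*pi*(a+n)) = cis (2*pi*a) * cis (2*pi*n)" by (simp add: cis_mult distrib_left)
  then show ?thesis using assms by (simp add: circ_def)
qed

lemma circ_eq_iff: "circ a = circ b \<longleftrightarrow> (\<exists>n::int. a = b + n)"
proof
  assume h: "circ a = circ b"
  have "cis (2 * pi * (a - b)) = 1"
    using h by (simp add: circ_def cis_divide[symmetric] right_diff_distrib)
  then have "Re (cis (2 * pi * (a - b))) = 1" by simp
  then have "cos (2 * pi * (a - b)) = 1" by simp
  then have "\<exists>n::int. 2 * pi * (a - b) = of_int n * 2 * pi" using cos_one_2pi_int by blast
  then obtain n :: int where "2 * pi * (a - b) = of_int n * 2 * pi" by blast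
  then have "(a - b - n) * (2 * pi) = 0" by (simp add: algebra_simps)
  then have "a - b = n" by simp
  then show "\<exists>n::int. a = b + n" by (intro exI[of _ n]) simp
next
  assume "\<exists>n::int. a = b + n"
  then obtain n :: int where "a = b + n" by blast
  then show "circ a = circ b" using circ_int[of "of_int n" b] by simp
qed

lemma S1_circ:
  assumes "cmod w = 1"
  shows "w = circ (Arg w / (2 * pi))"
proof -
  have "w \<noteq> 0" using assms by auto
  then have "cis (Arg w) = sgn w" by (rule cis_Arg)
  also have "sgn w = w" using assms by (simp add: sgn_div_norm)
  finally show ?thesis by (simp add: circ_def)
qed

lemma ccw_circ: "ccw_dist (circ t) (circ s) = frac (s - t)"
proof -
  define u where "u = s - t"
  define y where "y = u - of_int (ceiling (u - 1/2))"
  have y1: "- 1/2 < y" "y \<le> 1/2" unfolding y_def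
    using ceiling_correct[of "u - 1/2"] by linarith+
  have "circ s / circ t = cis (2 * pi * u)"
    by (simp add: circ_def cis_divide u_def right_diff_distrib)
  also have "\<dots> = cis (2 * pi * y)"
    using circ_int[of "- of_int (ceiling (u - 1/2))" u] unfolding y_def circ_def
    by simp
  finally have e: "circ s / circ t = cis (2 * pi * y)" .
  have "2*pi*(-1/2) < 2*pi*y" by (rule mult_strict_left_mono) (use y1 pi_gt_zero in auto)
  moreover have "2*pi*y \<le> 2*pi*(1/2)" by (rule mult_left_mono) (use y1 pi_gt_zero in auto)
  ultimately have "Arg (cis (2 * pi * y)) = 2 * pi * y"
    by (intro Arg_cis) auto
  then have "ccw_dist (circ t) (circ s) = frac y"
    unfolding ccw_dist_def e by simp
  also have "frac y = frac u" unfolding y_def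
    using frac_add_of_int_right[of u "- ceiling (u - 1/2)"] by simp
  finally show ?thesis by (simp add: u_def)
qed

lemma ccw_ge0: "ccw_dist v w \<ge> 0" by (simp add: ccw_dist_def)
lemma ccw_lt1: "ccw_dist v w < 1" by (simp add: ccw_dist_def frac_lt_1)

lemma circ_ccw:
  assumes "cmod w = 1"
  shows "circ (t + ccw_dist (circ t) w) = w"
proof -
  obtain s where s: "w = circ s" using S1_circ[OF assms] by blast
  have "t + frac (s - t) = s + of_int (- floor (s - t))"
    by (simp add: frac_def)
  then show ?thesis using s ccw_circ circ_int[of "of_int (- floor (s - t))" s] by simp
qed

lemma ccw_pos:
  assumes "cmod v = 1" "cmod w = 1" "w \<noteq> v"
  shows "ccw_dist v w > 0"
proof -
  obtain t where t: "v = circ t" using S1_circ[OF assms(1)] by blast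
  have "ccw_dist v w \<noteq> 0"
  proof
    assume h: "ccw_dist v w = 0"
    have "circ (t + ccw_dist (circ t) w) = w" by (rule circ_ccw[OF assms(2)])
    then have "circ t = w" using h t by simp
    then show False using t assms(3) by simp
  qed
  then show ?thesis using ccw_ge0[of v w] by linarith
qed

lemma ccw_inj:
  assumes "cmod v = 1" "cmod w = 1" "cmod w' = 1" "ccw_dist v w = ccw_dist v w'"
  shows "w = w'"
proof -
  obtain t where t: "v = circ t" using S1_circ[OF assms(1)] by blast
  have 1: "circ (t + ccw_dist (circ t) w) = w" by (rule circ_ccw[OF assms(2)])
  have 2: "circ (t + ccw_dist (circ t) w') = w'" by (rule circ_ccw[OF assms(3)])
  have "ccw_dist (circ t) w = ccw_dist (circ t) w'" using assms(4) t by simp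
  then show ?thesis using 1 2 by metis
qed

lemma trig_id:
  fixes x y :: real
  shows "sin (2 * (y - x)) + sin (2 * x) - sin (2 * y) = 4 * sin x * sin y * sin (y - x)"
proof -
  have e1: "(cos x)^2 = 1 - (sin x)^2" and e2: "(cos y)^2 = 1 - (sin y)^2"
    by (simp_all add: cos_squared_eq)
  show ?thesis unfolding sin_double sin_diff cos_diff using e1 e2 by algebra
qed

lemma trig3: fixes A B C :: real shows "(cos B - cos A)*(sin C - sin A) - (sin B - sin A)*(cos C - cos A) = sin (C-B) + sin (B-A) + sin (A-C)"
  unfolding sin_diff by algebra

lemma cross_circ:
  "cross (circ (a + b) - circ a) (circ (a + c) - circ a) =
     4 * sin (pi * b) * sin (pi * c) * sin (pi * (c - b))"
proof -
  define A where "A = 2*pi*a"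
  define B where "B = 2*pi*(a+b)"
  define C where "C = 2*pi*(a+c)"
  have e1: "circ a = cis A" "circ (a+b) = cis B" "circ (a+c) = cis C"
    by (simp_all add: circ_def A_def B_def C_def)
  have "cross (circ (a + b) - circ a) (circ (a + c) - circ a) =
        (cos B - cos A)*(sin C - sin A) - (sin B - sin A)*(cos C - cos A)"
    unfolding e1 cross_alt by simp
  also have "\<dots> = sin (C-B) + sin (B-A) + sin (A-C)" by (rule trig3)
  also have "C - B = 2 * (pi*c - pi*b)" by (simp add: B_def C_def algebra_simps)
  also have "B - A = 2 * (pi*b)" by (simp add: A_def B_def algebra_simps)
  also have "A - C = - (2 * (pi*c))" by (simp add: A_def C_def algebra_simps)
  also have "sin (2 * (pi*c - pi*b)) + sin (2 * (pi*b)) + sin (- (2 * (pi*c))) =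
     sin (2 * (pi*c - pi*b)) + sin (2 * (pi*b)) - sin (2 * (pi*c))" by simp
  also have "\<dots> = 4 * sin (pi * b) * sin (pi * c) * sin (pi * c - pi * b)"
    by (rule trig_id)
  finally show ?thesis by (simp add: right_diff_distrib)
qed

lemma sin_pi_pos: "0 < x \<Longrightarrow> x < 1 \<Longrightarrow> sin (pi * x) > 0"
  by (rule sin_gt_zero) auto

lemma sign_sin_diff:
  assumes "-1 < x" "x < 1"
  shows "(sin (pi * x) > 0 \<longleftrightarrow> x > 0) \<and> (sin (pi * x) = 0 \<longleftrightarrow> x = 0)"
proof (cases "x > 0")
  case True then show ?thesis using sin_pi_pos[of x] assms by auto
next
  case False
  show ?thesis
  proof (cases "x = 0")
    case True then show ?thesis by simp
  next
    case False
    with \<open>\<not> x > 0\<close> have "0 < -x" "-x < 1" using assms by auto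
    then have "sin (pi * (-x)) > 0" by (rule sin_pi_pos)
    then show ?thesis using False \<open>\<not> x > 0\<close> by simp
  qed
qed

lemma cross_ccw:
  assumes "cmod v = 1" "cmod w = 1" "cmod u = 1" "w \<noteq> v" "u \<noteq> v"
  shows "(cross (w - v) (u - v) > 0 \<longleftrightarrow> ccw_dist v w < ccw_dist v u) \<and>
         (cross (w - v) (u - v) = 0 \<longleftrightarrow> ccw_dist v w = ccw_dist v u)"
proof -
  obtain a where a: "v = circ a" using S1_circ[OF assms(1)] by blast
  define b where "b = ccw_dist v w"
  define c where "c = ccw_dist v u"
  have w: "w = circ (a + b)" using circ_ccw[OF assms(2), of a] a b_def by simp
  have u: "u = circ (a + c)" using circ_ccw[OF assms(3), of a] a c_def by simp
  have b: "0 < b" "b < 1" using ccw_pos[OF assms(1,2,4)] ccw_lt1 b_def by auto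
  have c: "0 < c" "c < 1" using ccw_pos[OF assms(1,3,5)] ccw_lt1 c_def by auto
  have sb: "sin (pi * b) > 0" using b sin_pi_pos by auto
  have sc: "sin (pi * c) > 0" using c sin_pi_pos by auto
  have e: "cross (w - v) (u - v) = 4 * sin (pi * b) * sin (pi * c) * sin (pi * (c - b))"
    using cross_circ a w u by simp
  have s: "(sin (pi * (c - b)) > 0 \<longleftrightarrow> c - b > 0) \<and> (sin (pi * (c - b)) = 0 \<longleftrightarrow> c - b = 0)"
    by (rule sign_sin_diff) (use b c in auto)
  have pp: "4 * sin (pi * b) * sin (pi * c) > 0" using sb sc by simp
  have f1: "cross (w - v) (u - v) > 0 \<longleftrightarrow> sin (pi * (c - b)) > 0"
    unfolding e using pp by (metis mult_pos_pos zero_less_mult_pos)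
  have f2: "cross (w - v) (u - v) = 0 \<longleftrightarrow> sin (pi * (c - b)) = 0"
    unfolding e using sb sc by simp
  have A: "(cross (w - v) (u - v) > 0) = (b < c)" using f1 s by simp
  have B: "(cross (w - v) (u - v) = 0) = (b = c)" using f2 s by auto
  show ?thesis using A B by (simp only: b_def c_def)
qed



lemma S1_iff: "w \<in> S1 \<longleftrightarrow> cmod w = 1" by (simp add: S1_def)
lemma KD_iff: "w \<in> KD \<longleftrightarrow> cmod w < 1" by (simp add: KD_def)

lemma vertex_side:
  assumes "cmod v = 1" "cmod w = 1" "w \<noteq> v" "cmod Y < 1"
  shows "(cross (w - v) (Y - v) > 0 \<longleftrightarrow> ccw_dist v w < ccw_dist v (sec Y v)) \<and>
         (cross (w - v) (Y - v) = 0 \<longleftrightarrow> ccw_dist v w = ccw_dist v (sec Y v))"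
proof -
  have tp: "tpar Y v > 1" by (rule tpar_gt1[OF assms(4,1)])
  have e: "cross (w - v) (Y - v) = (1 / tpar Y v) * cross (w - v) (sec Y v - v)"
    by (simp only: sec_X[OF assms(4,1)] xcross_scale_right)
  have pos: "1 / tpar Y v > 0" using tp by simp
  have c: "(cross (w - v) (sec Y v - v) > 0 \<longleftrightarrow> ccw_dist v w < ccw_dist v (sec Y v)) \<and>
         (cross (w - v) (sec Y v - v) = 0 \<longleftrightarrow> ccw_dist v w = ccw_dist v (sec Y v))"
    by (rule cross_ccw[OF assms(1,2) sec_unit[OF assms(4,1)] assms(3) sec_ne[OF assms(4,1)]])
  have 1: "cross (w - v) (Y - v) > 0 \<longleftrightarrow> cross (w - v) (sec Y v - v) > 0"
    unfolding e using pos by (simp add: zero_less_divide_iff)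
  have 2: "cross (w - v) (Y - v) = 0 \<longleftrightarrow> cross (w - v) (sec Y v - v) = 0"
    unfolding e using pos by simp
  show ?thesis using 1 2 c by blast
qed

lemma hull3_cross:
  assumes "z \<in> convex hull {P, Q, R}"
  shows "\<exists>a b c. 0 \<le> a \<and> 0 \<le> b \<and> 0 \<le> c \<and> a + b + c = 1 \<and>
     cross d (z - v) = a * cross d (P - v) + b * cross d (Q - v) + c * cross d (R - v)"
proof -
  obtain a b c where abc: "0 \<le> a" "0 \<le> b" "0 \<le> c" "a + b + c = 1"
    and z: "z = a *\<^sub>R P + b *\<^sub>R Q + c *\<^sub>R R"
    using assms unfolding convex_hull_3 by blast
  have e: "z - v = a *\<^sub>R (P - v) + b *\<^sub>R (Q - v) + c *\<^sub>R (R - v)"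
    using z abc(4) by (simp add: algebra_simps) (metis add.assoc scaleR_add_left scaleR_one)
  have "cross d (z - v) = a * cross d (P - v) + b * cross d (Q - v) + c * cross d (R - v)"
    by (simp only: e) (simp add: cross_alt scaleR_conv_of_real algebra_simps)
  then show ?thesis using abc by blast
qed

lemma hull3_nonneg:
  assumes "z \<in> convex hull {P, Q, R}" "cross d (P - v) \<ge> 0" "cross d (Q - v) \<ge> 0" "cross d (R - v) \<ge> 0"
  shows "cross d (z - v) \<ge> 0"
proof -
  obtain a b c where h: "0 \<le> a" "0 \<le> b" "0 \<le> c" "a + b + c = 1"
     "cross d (z - v) = a * cross d (P - v) + b * cross d (Q - v) + c * cross d (R - v)"
    using hull3_cross[OF assms(1)] by blast
  show ?thesis unfolding h(5) using h(1-3) assms(2-4) by simp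
qed

lemma hull3_pos:
  assumes "z \<in> convex hull {P, Q, R}" "cross d (P - v) > 0" "cross d (Q - v) > 0" "cross d (R - v) > 0"
  shows "cross d (z - v) > 0"
proof -
  obtain a b c where h: "0 \<le> a" "0 \<le> b" "0 \<le> c" "a + b + c = 1"
     "cross d (z - v) = a * cross d (P - v) + b * cross d (Q - v) + c * cross d (R - v)"
    using hull3_cross[OF assms(1)] by blast
  have "a > 0 \<or> b > 0 \<or> c > 0" using h(1-4) by linarith
  then show ?thesis unfolding h(5) using h(1-3) assms(2-4)
    by (smt (verit, best) mult_nonneg_nonneg mult_pos_pos)
qed

definition mm :: "complex \<Rightarrow> complex \<Rightarrow> complex \<Rightarrow> complex \<Rightarrow> real" where
  "mm P Q R v = min (min (ccw_dist v (sec P v)) (ccw_dist v (sec Q v))) (ccw_dist v (sec R v))"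

lemma psi_tri_char:
  assumes P: "cmod P < 1" and Q: "cmod Q < 1" and R: "cmod R < 1" and v: "cmod v = 1"
  shows "cmod (psi_tri (convex hull {P, Q, R}) v) = 1 \<and>
         ccw_dist v (psi_tri (convex hull {P, Q, R}) v) = mm P Q R v"
proof -
  define T where "T = convex hull {P, Q, R}"
  define m where "m = mm P Q R v"
  obtain X where X: "X \<in> {P, Q, R}" "ccw_dist v (sec X v) = m"
    unfolding m_def mm_def by (metis insertCI min_def)
  have Xd: "cmod X < 1" using X P Q R by auto
  have mle: "\<And>Y. Y \<in> {P, Q, R} \<Longrightarrow> m \<le> ccw_dist v (sec Y v)"
    unfolding m_def mm_def by auto
  define w0 where "w0 = sec X v"
  have w0u: "cmod w0 = 1" unfolding w0_def by (rule sec_unit[OF Xd v])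
  have w0v: "w0 \<noteq> v" unfolding w0_def by (rule sec_ne[OF Xd v])
  have side: "\<And>w Y. cmod w = 1 \<Longrightarrow> w \<noteq> v \<Longrightarrow> Y \<in> {P, Q, R} \<Longrightarrow>
     (cross (w - v) (Y - v) > 0 \<longleftrightarrow> ccw_dist v w < ccw_dist v (sec Y v)) \<and>
     (cross (w - v) (Y - v) = 0 \<longleftrightarrow> ccw_dist v w = ccw_dist v (sec Y v))"
    using vertex_side[OF v] P Q R by blast
  have nn: "\<And>Y. Y \<in> {P, Q, R} \<Longrightarrow> cross (w0 - v) (Y - v) \<ge> 0"
  proof -
    fix Y assume Y: "Y \<in> {P, Q, R}"
    have "ccw_dist v w0 \<le> ccw_dist v (sec Y v)" using mle[OF Y] X(2) w0_def by simp
    then show "cross (w0 - v) (Y - v) \<ge> 0" using side[OF w0u w0v Y] by force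
  qed
  have sup0: "supports v w0 T"
    unfolding supports_def
  proof
    show "\<exists>z\<in>T. cross (w0 - v) (z - v) = 0"
      using side[OF w0u w0v X(1)] X(1) w0_def T_def hull_subset[of "{P,Q,R}" convex] by blast
    show "(\<forall>z\<in>T. 0 \<le> cross (w0 - v) (z - v)) \<or> (\<forall>z\<in>T. cross (w0 - v) (z - v) \<le> 0)"
      using hull3_nonneg nn T_def by blast
  qed
  have minim: "\<And>w'. w' \<in> S1 \<Longrightarrow> w' \<noteq> v \<Longrightarrow> supports v w' T \<Longrightarrow> ccw_dist v w0 \<le> ccw_dist v w'"
  proof (rule ccontr)
    fix w' assume w': "w' \<in> S1" "w' \<noteq> v" "supports v w' T" and c: "\<not> ccw_dist v w0 \<le> ccw_dist v w'"
    have w'u: "cmod w' = 1" using w' S1_iff by blast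
    have pos: "\<And>Y. Y \<in> {P, Q, R} \<Longrightarrow> cross (w' - v) (Y - v) > 0"
    proof -
      fix Y assume Y: "Y \<in> {P, Q, R}"
      have "ccw_dist v w' < ccw_dist v (sec Y v)" using mle[OF Y] X(2) w0_def c by simp
      then show "cross (w' - v) (Y - v) > 0" using side[OF w'u w'(2) Y] by blast
    qed
    have allpos: "\<forall>z\<in>T. cross (w' - v) (z - v) > 0"
      using hull3_pos pos T_def by blast
    then show False using w'(3) unfolding supports_def by force
  qed
  have pr: "w0 \<in> S1 \<and> w0 \<noteq> v \<and> supports v w0 T \<and>
      (\<forall>w'. w' \<in> S1 \<and> w' \<noteq> v \<and> supports v w' T \<longrightarrow> ccw_dist v w0 \<le> ccw_dist v w')"
    using w0u w0v sup0 minim S1_iff by blast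
  have "psi_tri T v = w0"
    unfolding psi_tri_def
  proof (rule the_equality)
    show "w0 \<in> S1 \<and> w0 \<noteq> v \<and> supports v w0 T \<and>
      (\<forall>w'. w' \<in> S1 \<and> w' \<noteq> v \<and> supports v w' T \<longrightarrow> ccw_dist v w0 \<le> ccw_dist v w')" by (rule pr)
  next
    fix w assume h: "w \<in> S1 \<and> w \<noteq> v \<and> supports v w T \<and>
      (\<forall>w'. w' \<in> S1 \<and> w' \<noteq> v \<and> supports v w' T \<longrightarrow> ccw_dist v w \<le> ccw_dist v w')"
    have 1: "ccw_dist v w \<le> ccw_dist v w0" using h pr by blast
    have 2: "ccw_dist v w0 \<le> ccw_dist v w" using minim h by blast
    show "w = w0" using ccw_inj[OF v _ w0u] 1 2 h S1_iff by force
  qed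
  then show ?thesis using w0u X(2) w0_def m_def T_def by simp
qed



lemma ccw_arg:
  assumes "cmod v = 1" "cmod w = 1" "w \<noteq> v"
  shows "ccw_dist v w = Arg (- (w / v)) / (2 * pi) + 1/2"
proof -
  define z where "z = w / v"
  have v0: "v \<noteq> 0" using assms by auto
  have zu: "cmod z = 1" using assms by (simp add: z_def norm_divide)
  have z1: "z \<noteq> 1" using assms v0 by (simp add: z_def)
  have z0: "z \<noteq> 0" using zu by auto
  have Arg0: "Arg z \<noteq> 0"
  proof
    assume "Arg z = 0"
    then have "cis (Arg z) = 1" by simp
    moreover have "cis (Arg z) = sgn z" by (rule cis_Arg[OF z0])
    moreover have "sgn z = z" using zu by (simp add: sgn_div_norm)
    ultimately show False using z1 by simp
  qed
  have b: "- pi < Arg z" "Arg z \<le> pi" using Arg_bounded by auto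
  have m: "Arg (- z) = (if Arg z \<le> 0 then Arg z + pi else Arg z - pi)" by (rule Arg_minus[OF z0])
  show ?thesis
  proof (cases "Arg z \<le> 0")
    case True
    then have lt: "Arg z < 0" using Arg0 by simp
    have "Arg z / (2*pi) = (Arg z / (2*pi) + 1) + of_int (-1)" by simp
    then have "frac (Arg z / (2*pi)) = frac (Arg z / (2*pi) + 1)" by (metis frac_add_of_int_right)
    also have "\<dots> = Arg z / (2*pi) + 1"
    proof (subst frac_eq, rule conjI)
      have "Arg z / (2*pi) > -pi / (2*pi)" using b(1) by (intro divide_strict_right_mono) auto
      then show "0 \<le> Arg z / (2*pi) + 1" by simp
      have "Arg z / (2*pi) < 0" using lt by (simp add: divide_neg_pos)
      then show "Arg z / (2*pi) + 1 < 1" by simp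
    qed
    finally show ?thesis unfolding ccw_dist_def z_def[symmetric] using m True
      by (simp add: field_simps)
  next
    case False
    have "frac (Arg z / (2*pi)) = Arg z / (2*pi)"
    proof (subst frac_eq, rule conjI)
      show "0 \<le> Arg z / (2*pi)" using False by simp
      have "Arg z / (2*pi) \<le> pi / (2*pi)" using b(2) by (intro divide_right_mono) auto
      have "Arg z < 2*pi" using b(2) pi_gt_zero by linarith
      then show "Arg z / (2*pi) < 1" using pi_gt_zero by (simp add: divide_less_eq)
    qed
    then show ?thesis unfolding ccw_dist_def z_def[symmetric] using m False
      by (simp add: field_simps)
  qed
qed

lemma cont_circ: "continuous_on S circ"
  unfolding circ_def by (intro continuous_intros)

lemma cont_ccw_sec:
  assumes X: "cmod X < 1"
  shows "continuous_on UNIV (\<lambda>x. ccw_dist (circ x) (sec X (circ x)))"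
proof -
  have cs: "continuous_on UNIV (\<lambda>x. sec X (circ x))"
    by (rule continuous_on_compose2[OF continuous_on_sec[OF X] cont_circ]) (auto simp: S1_iff)
  have c2: "continuous_on UNIV (\<lambda>x. - (sec X (circ x) / circ x))"
    by (intro continuous_intros cs cont_circ) (metis circ_unit norm_zero zero_neq_one)
  have np: "\<And>x. - (sec X (circ x) / circ x) \<notin> \<real>\<^sub>\<le>\<^sub>0"
  proof
    fix x assume h: "- (sec X (circ x) / circ x) \<in> \<real>\<^sub>\<le>\<^sub>0"
    define z where "z = sec X (circ x) / circ x"
    have zu: "cmod z = 1" using sec_unit[OF X circ_unit] by (simp add: z_def norm_divide)
    have "Re z \<ge> 0" "Im z = 0" using h by (auto simp: complex_nonpos_Reals_iff z_def)
    then have "z = of_real (Re z)" by (simp add: complex_eq_iff)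
    moreover have "\<bar>Re z\<bar> = 1" using zu \<open>Im z = 0\<close> by (simp add: cmod_def)
    ultimately have "z = 1" using \<open>Re z \<ge> 0\<close> by simp
    then have "sec X (circ x) = circ x" unfolding z_def
      by (metis circ_unit divide_self_if norm_zero zero_neq_one nonzero_divide_eq_eq mult_1)
    then show False using sec_ne[OF X circ_unit] by simp
  qed
  have c3: "continuous_on UNIV (\<lambda>x. Arg (- (sec X (circ x) / circ x)) / (2 * pi) + 1/2)"
    by (intro continuous_intros c2 np) auto
  have e: "\<And>x. ccw_dist (circ x) (sec X (circ x)) = Arg (- (sec X (circ x) / circ x)) / (2 * pi) + 1/2"
    by (rule ccw_arg[OF circ_unit sec_unit[OF X circ_unit] sec_ne[OF X circ_unit]])
  show ?thesis unfolding e by (rule c3)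
qed

definition G :: "complex \<Rightarrow> real \<Rightarrow> real" where
  "G X x = x + ccw_dist (circ x) (sec X (circ x))"

definition Fm :: "complex \<Rightarrow> complex \<Rightarrow> complex \<Rightarrow> real \<Rightarrow> real" where
  "Fm P Q R x = x + mm P Q R (circ x)"

lemma Fm_G: "Fm P Q R x = min (min (G P x) (G Q x)) (G R x)"
  by (simp add: Fm_def mm_def G_def min_add_distrib_left)

lemma cont_G: "cmod X < 1 \<Longrightarrow> continuous_on UNIV (G X)"
  unfolding G_def by (intro continuous_intros cont_ccw_sec)

lemma G_int: "G X (x + of_int n) = G X x + of_int n"
  unfolding G_def using circ_int[of "of_int n" x] by simp

lemma G_circ: "cmod X < 1 \<Longrightarrow> circ (G X x) = sec X (circ x)"
  unfolding G_def by (rule circ_ccw[OF sec_unit[OF _ circ_unit]])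

lemma G_inj:
  assumes X: "cmod X < 1" and e: "G X a = G X b"
  shows "a = b"
proof -
  have "sec X (circ a) = sec X (circ b)" using G_circ[OF X, of a] G_circ[OF X, of b] e by simp
  then have "sec X (sec X (circ a)) = sec X (sec X (circ b))" by simp
  then have "circ a = circ b" using sec_invol[OF X circ_unit] by simp
  then obtain n :: int where n: "a = b + of_int n" using circ_eq_iff by blast
  then have "G X a = G X b + of_int n" using G_int by simp
  then have "n = 0" using e by simp
  then show ?thesis using n by simp
qed

lemma G_strict_mono:
  assumes X: "cmod X < 1" and ab: "a < b"
  shows "G X a < G X b"
proof (rule ccontr)
  assume "\<not> G X a < G X b"
  then have le: "G X b \<le> G X a" by simp
  define k where "k = (\<lambda>s. G X (a + s) - G X a)"
  have ck: "continuous_on UNIV k" unfolding k_def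
    by (intro continuous_intros continuous_on_compose2[OF cont_G[OF X]]) auto
  have k1: "k 1 = 1" unfolding k_def using G_int[of X a 1] by simp
  have kd: "k (b - a) \<le> 0" unfolding k_def using le by simp
  have "\<exists>s. min 1 (b - a) \<le> s \<and> s \<le> max 1 (b - a) \<and> k s = 0"
  proof (cases "b - a \<le> 1")
    case True
    show ?thesis using IVT'[of k "b - a" 0 1] kd k1 True continuous_on_subset[OF ck] by auto
  next
    case False
    show ?thesis using IVT2'[of k "b - a" 0 1] kd k1 False continuous_on_subset[OF ck] by auto
  qed
  then obtain s where s: "s > 0" "k s = 0" using ab by (metis less_le_trans min_less_iff_conj zero_less_one diff_gt_0_iff_gt)
  then have "G X (a + s) = G X a" unfolding k_def by simp
  then have "a + s = a" by (rule G_inj[OF X])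
  then show False using s by simp
qed

lemma Fm_strict_mono:
  assumes "cmod P < 1" "cmod Q < 1" "cmod R < 1" "a < b"
  shows "Fm P Q R a < Fm P Q R b"
  unfolding Fm_G using G_strict_mono[OF assms(1,4)] G_strict_mono[OF assms(2,4)] G_strict_mono[OF assms(3,4)]
  by linarith

lemma Fm_le: "X \<in> {P, Q, R} \<Longrightarrow> Fm P Q R x \<le> G X x"
  unfolding Fm_G by auto

lemma psi_lift_eq:
  assumes P: "cmod P < 1" and Q: "cmod Q < 1" and R: "cmod R < 1"
  shows "psi_lift (convex hull {P, Q, R}) = Fm P Q R"
proof -
  define T where "T = convex hull {P, Q, R}"
  define F where "F = Fm P Q R"
  have cF: "continuous_on UNIV F" unfolding F_def Fm_G
    by (intro continuous_intros cont_G P Q R)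
  have circF: "\<And>x. circ (F x) = psi_tri T (circ x)"
  proof -
    fix x
    have c: "cmod (psi_tri T (circ x)) = 1 \<and> ccw_dist (circ x) (psi_tri T (circ x)) = mm P Q R (circ x)"
      unfolding T_def by (rule psi_tri_char[OF P Q R circ_unit])
    then show "circ (F x) = psi_tri T (circ x)"
      unfolding F_def Fm_def using circ_ccw[of "psi_tri T (circ x)" x] by metis
  qed
  have mm01: "0 < mm P Q R (circ 0) \<and> mm P Q R (circ 0) < 1"
    unfolding mm_def using ccw_pos[OF circ_unit sec_unit[OF _ circ_unit] sec_ne[OF _ circ_unit]] P Q R
      ccw_lt1 by (simp add: min_def)
  have F0: "0 < F 0" "F 0 < 1" using mm01 unfolding F_def Fm_def by auto
  have "psi_lift T = F"
    unfolding psi_lift_def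
  proof (rule the_equality)
    show "continuous_on UNIV F \<and> (\<forall>x. circ (F x) = psi_tri T (circ x)) \<and> 0 < F 0 \<and> F 0 < 1"
      using cF circF F0 by blast
  next
    fix g assume h: "continuous_on UNIV g \<and> (\<forall>x. circ (g x) = psi_tri T (circ x)) \<and> 0 < g 0 \<and> g 0 < 1"
    have int: "\<And>x. \<exists>n::int. g x - F x = of_int n"
    proof -
      fix x
      have "circ (g x) = circ (F x)" using h circF by simp
      then obtain n :: int where "g x = F x + of_int n" using circ_eq_iff by blast
      then show "\<exists>n::int. g x - F x = of_int n" by (intro exI[of _ n]) simp
    qed
    have cd: "continuous_on UNIV (\<lambda>x. g x - F x)" using h cF by (intro continuous_intros) auto
    have "(\<lambda>x. g x - F x) constant_on UNIV"
    proof (rule continuous_discrete_range_constant[OF connected_UNIV cd])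
      fix x :: real
      show "\<exists>e>0. \<forall>y. y \<in> UNIV \<and> g y - F y \<noteq> g x - F x \<longrightarrow> e \<le> norm (g y - F y - (g x - F x))"
      proof (intro exI[of _ 1] conjI allI impI)
        fix y assume "y \<in> UNIV \<and> g y - F y \<noteq> g x - F x"
        moreover obtain n :: int where n: "g x - F x = of_int n" using int by blast
        moreover obtain m :: int where m: "g y - F y = of_int m" using int by blast
        ultimately have "m \<noteq> n" by auto
        then have "1 \<le> \<bar>m - n\<bar>" by linarith
        then have "1 \<le> \<bar>of_int m - of_int n :: real\<bar>"
          by (metis of_int_abs of_int_diff of_int_le_iff of_int_1)
        then show "1 \<le> norm (g y - F y - (g x - F x))" using n m by simp
      qed simp
    qed
    then obtain c where c: "\<And>x. g x - F x = c" unfolding constant_on_def by blast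
    obtain n :: int where n: "g 0 - F 0 = of_int n" using int by blast
    have "\<bar>of_int n :: real\<bar> < 1" using n h F0 by simp
    then have "n = 0" by simp
    then have "c = 0" using c[of 0] n by simp
    then show "g = F" using c by (simp add: fun_eq_iff)
  qed
  then show ?thesis unfolding T_def F_def .
qed



lemma Fm_mono: "cmod P < 1 \<Longrightarrow> cmod Q < 1 \<Longrightarrow> cmod R < 1 \<Longrightarrow> a \<le> b \<Longrightarrow> Fm P Q R a \<le> Fm P Q R b"
  using Fm_strict_mono by (metis order_le_less)

lemma sec_minus: "sec X c - c = of_real (tpar X c) * (X - c)"
  by (simp add: sec_def)

lemma chain:
  assumes P: "cmod P < 1" and Q: "cmod Q < 1" and R: "cmod R < 1" and c: "cmod c = 1"
    and o1: "cross (Q - P) (c - P) < 0"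
    and o2: "cross (sec P c - sec Q c) (R - sec Q c) < 0"
    and x: "circ x = c"
  shows "(Fm P Q R ^^ 3) x < x + 1"
proof -
  define F where "F = Fm P Q R"
  define v1 where "v1 = sec Q c"
  define v2 where "v2 = sec P c"
  define al where "al = ccw_dist c v1"
  define be where "be = ccw_dist c v2"
  have v1u: "cmod v1 = 1" unfolding v1_def by (rule sec_unit[OF Q c])
  have v2u: "cmod v2 = 1" unfolding v2_def by (rule sec_unit[OF P c])
  have v1c: "v1 \<noteq> c" unfolding v1_def by (rule sec_ne[OF Q c])
  have v2c: "v2 \<noteq> c" unfolding v2_def by (rule sec_ne[OF P c])
  have tQ: "tpar Q c > 1" by (rule tpar_gt1[OF Q c])
  have tP: "tpar P c > 1" by (rule tpar_gt1[OF P c])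
  have "cross (v1 - c) (v2 - c) = tpar Q c * tpar P c * cross (Q - c) (P - c)"
    unfolding v1_def v2_def sec_minus by (simp add: xcross_scale_left xcross_scale_right)
  also have "cross (Q - c) (P - c) = - cross (Q - P) (c - P)"
    by (simp add: cross_alt algebra_simps)
  finally have e: "cross (v1 - c) (v2 - c) = - (tpar Q c * tpar P c * cross (Q - P) (c - P))" by simp
  have "tpar Q c * tpar P c > 0" using tQ tP by simp
  then have "tpar Q c * tpar P c * cross (Q - P) (c - P) < 0" using o1 by (simp add: mult_pos_neg)
  then have "cross (v1 - c) (v2 - c) > 0" using e by simp
  then have albe: "al < be" using cross_ccw[OF c v1u v2u v1c v2c] al_def be_def by blast
  have al: "0 < al" "al < 1" using ccw_pos[OF c v1u v1c] ccw_lt1 al_def by auto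
  have be: "0 < be" "be < 1" using ccw_pos[OF c v2u v2c] ccw_lt1 be_def by auto
  have cv1: "circ (x + al) = v1" unfolding al_def using circ_ccw[OF v1u, of x] x by simp
  have cv2: "circ (x + be) = v2" unfolding be_def using circ_ccw[OF v2u, of x] x by simp
  have v12: "v2 \<noteq> v1"
  proof
    assume "v2 = v1"
    then have "be = al" unfolding al_def be_def by simp
    then show False using albe by simp
  qed
  have s1: "F x \<le> x + al"
  proof -
    have "F x \<le> G Q x" unfolding F_def by (rule Fm_le) simp
    also have "G Q x = x + al" unfolding G_def al_def v1_def using x by simp
    finally show ?thesis .
  qed
  have s2: "F (x + al) < x + be"
  proof -
    have "F (x + al) \<le> G R (x + al)" unfolding F_def by (rule Fm_le) simp
    also have "G R (x + al) = x + al + ccw_dist v1 (sec R v1)" unfolding G_def using cv1 by simp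
    also have "ccw_dist v1 (sec R v1) < ccw_dist v1 v2"
    proof -
      have vs: "(cross (v2 - v1) (R - v1) > 0 \<longleftrightarrow> ccw_dist v1 v2 < ccw_dist v1 (sec R v1)) \<and>
         (cross (v2 - v1) (R - v1) = 0 \<longleftrightarrow> ccw_dist v1 v2 = ccw_dist v1 (sec R v1))"
        by (rule vertex_side[OF v1u v2u v12 R])
      have "cross (v2 - v1) (R - v1) < 0" using o2 v1_def v2_def by simp
      then show ?thesis using vs by linarith
    qed
    also have "ccw_dist v1 v2 = be - al"
      using ccw_circ[of "x + al" "x + be"] cv1 cv2 albe be al by (simp add: frac_eq)
    finally show ?thesis by simp
  qed
  have s3: "F (x + be) \<le> x + 1"
  proof -
    have "F (x + be) \<le> G P (x + be)" unfolding F_def by (rule Fm_le) simp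
    also have "G P (x + be) = x + be + ccw_dist v2 c"
      unfolding G_def using cv2 sec_invol[OF P c] v2_def by simp
    also have "ccw_dist v2 c = 1 - be"
    proof -
      have "ccw_dist v2 c = frac (x - (x + be))" using ccw_circ[of "x + be" x] cv2 x by simp
      also have "frac (x - (x + be)) = frac (1 - be + of_int (-1))" by simp
      also have "\<dots> = 1 - be" using be by (simp only: frac_add_of_int_right) (simp add: frac_eq)
      finally show ?thesis .
    qed
    finally show ?thesis by simp
  qed
  have "F (F x) \<le> F (x + al)" unfolding F_def by (rule Fm_mono[OF P Q R]) (use s1 F_def in simp)
  also have "\<dots> < x + be" by (rule s2)
  finally have "F (F x) < x + be" .
  then have "F (F (F x)) < F (x + be)" unfolding F_def by (rule Fm_strict_mono[OF P Q R])
  then have "F (F (F x)) < x + 1" using s3 by simp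
  then show ?thesis unfolding F_def by (simp add: numeral_3_eq_3)
qed



definition EE :: "complex \<Rightarrow> complex \<Rightarrow> complex \<Rightarrow> complex \<Rightarrow> real" where
  "EE a b P Q = \<bar>ln ((cmod (Q - a) * cmod (P - b)) / (cmod (P - a) * cmod (Q - b)))\<bar> / 2"

definition vp :: "complex \<Rightarrow> complex \<Rightarrow> complex \<Rightarrow> complex \<Rightarrow> bool" where
  "vp P Q a b \<longleftrightarrow> a \<in> S1 \<and> b \<in> S1 \<and> a \<noteq> b \<and> {P, Q} \<subseteq> affine hull {a, b}"

lemma aff2: "z \<in> affine hull {a, b} \<longleftrightarrow> (\<exists>l. z = a + of_real l * (b - a))"
proof
  assume "z \<in> affine hull {a, b}"
  then obtain u v where z: "z = u *\<^sub>R a + v *\<^sub>R b" and uv: "u + v = 1" unfolding affine_hull_2 by blast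
  have u: "u = 1 - v" using uv by simp
  have "z = (1 - v) *\<^sub>R a + v *\<^sub>R b" using z u by simp
  then have "z = a + of_real v * (b - a)"
    by (simp add: scaleR_conv_of_real algebra_simps of_real_diff)
  then show "\<exists>l. z = a + of_real l * (b - a)" by blast
next
  assume "\<exists>l. z = a + of_real l * (b - a)"
  then obtain l where "z = a + of_real l * (b - a)" by blast
  then have "z = (1 - l) *\<^sub>R a + l *\<^sub>R b" by (simp add: scaleR_conv_of_real algebra_simps)
  then show "z \<in> affine hull {a, b}" unfolding affine_hull_2 by force
qed

lemma chord_sq:
  assumes "cmod a = 1" "cmod b = 1"
  shows "(cmod (a + of_real l * (b - a)))^2 = 1 - l * (1 - l) * (cmod (b - a))^2"
proof -
  have ra: "Re (cnj a * a) = 1" using assms(1)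
    by (metis Re_complex_of_real complex_norm_square mult.commute one_power2)
  have rb: "Re (cnj b * b) = 1" using assms(2)
    by (metis Re_complex_of_real complex_norm_square mult.commute one_power2)
  have d: "(cmod (b - a))^2 = 2 - 2 * Re (cnj a * b)"
    using ra rb unfolding cmod_sq by (simp add: power2_eq_square algebra_simps)
  have "(cmod (a + of_real l * (b - a)))^2 = 1 + 2 * l * (Re (cnj a * b) - 1) + l^2 * (cmod (b - a))^2"
    unfolding norm_sq_line using assms(1) ra by (simp add: algebra_simps)
  then show ?thesis unfolding d by (simp add: power2_eq_square algebra_simps)
qed

lemma chord_unit:
  assumes "cmod a = 1" "cmod b = 1" "a \<noteq> b" "cmod (a + of_real l * (b - a)) = 1"
  shows "l = 0 \<or> l = 1"
proof -
  have "(cmod (b - a))^2 > 0" using assms(3) by simp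
  moreover have "l * (1 - l) * (cmod (b - a))^2 = 0" using chord_sq[OF assms(1,2), of l] assms(4) by simp
  ultimately show ?thesis by simp
qed

lemma chord_in:
  assumes "cmod a = 1" "cmod b = 1" "a \<noteq> b" "cmod (a + of_real l * (b - a)) < 1"
  shows "0 < l \<and> l < 1"
proof -
  have p: "(cmod (b - a))^2 > 0" using assms(3) by simp
  have "(cmod (a + of_real l * (b - a)))^2 < 1"
    using assms(4) by (metis abs_norm_cancel abs_square_less_1)
  then have "l * (1 - l) * (cmod (b - a))^2 > 0" using chord_sq[OF assms(1,2), of l] by simp
  then have "l * (1 - l) > 0" using p by (simp add: zero_less_mult_iff)
  then show ?thesis by (simp add: zero_less_mult_iff) linarith
qed

lemma EE_param:
  assumes "cmod a = 1" "cmod b = 1" "a \<noteq> b"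
    and P: "P = a + of_real p * (b - a)" and Q: "Q = a + of_real q * (b - a)"
    and p: "0 < p" "p < 1" and q: "0 < q" "q < 1"
  shows "EE a b P Q = \<bar>ln (q * (1 - p) / (p * (1 - q)))\<bar> / 2"
proof -
  define L where "L = cmod (b - a)"
  have L: "L > 0" using assms(3) L_def by simp
  have 1: "cmod (Q - a) = q * L" using Q q by (simp add: L_def norm_mult)
  have 2: "cmod (P - b) = (1 - p) * L"
  proof -
    have "P - b = of_real (p - 1) * (b - a)" using P by (simp add: algebra_simps)
    then have "cmod (P - b) = \<bar>p - 1\<bar> * L" unfolding L_def by (metis norm_mult norm_of_real)
    then show ?thesis using p by simp
  qed
  have 3: "cmod (P - a) = p * L" using P p by (simp add: L_def norm_mult)
  have 4: "cmod (Q - b) = (1 - q) * L"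
  proof -
    have "Q - b = of_real (q - 1) * (b - a)" using Q by (simp add: algebra_simps)
    then have "cmod (Q - b) = \<bar>q - 1\<bar> * L" unfolding L_def by (metis norm_mult norm_of_real)
    then show ?thesis using q by simp
  qed
  have "(q * L * ((1 - p) * L)) / (p * L * ((1 - q) * L)) = (q * (1 - p) * (L * L)) / (p * (1 - q) * (L * L))"
    by (simp add: algebra_simps)
  also have "\<dots> = q * (1 - p) / (p * (1 - q))"
    by (rule mult_divide_mult_cancel_right) (use L in simp)
  finally have "(q * L * ((1 - p) * L)) / (p * L * ((1 - q) * L)) = q * (1 - p) / (p * (1 - q))" .
  then show ?thesis unfolding EE_def 1 2 3 4 by simp
qed

lemma EE_swap:
  assumes "P \<noteq> a" "P \<noteq> b" "Q \<noteq> a" "Q \<noteq> b"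
  shows "EE b a P Q = EE a b P Q"
proof -
  define X where "X = (cmod (Q - a) * cmod (P - b)) / (cmod (P - a) * cmod (Q - b))"
  have X: "X > 0" using assms unfolding X_def by simp
  have "(cmod (Q - b) * cmod (P - a)) / (cmod (P - b) * cmod (Q - a)) = inverse X"
    unfolding X_def by (simp add: field_simps)
  then show ?thesis unfolding EE_def X_def[symmetric] using X by (simp add: ln_inverse)
qed

lemma param_of_aff:
  assumes "vp P Q a b" shows "\<exists>p q. P = a + of_real p * (b - a) \<and> Q = a + of_real q * (b - a)"
proof -
  have "P \<in> affine hull {a, b}" "Q \<in> affine hull {a, b}" using assms vp_def by auto
  then show ?thesis unfolding aff2 by blast
qed

lemma vp_sym: "vp P Q a b \<Longrightarrow> vp P Q b a"
  unfolding vp_def by (auto simp: insert_commute)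

lemma vp_same:
  assumes v: "vp P Q a b" and w: "vp P Q c d" and PQ: "P \<noteq> Q"
  shows "c \<in> {a, b}"
proof -
  obtain p q where pq: "P = a + of_real p * (b - a)" "Q = a + of_real q * (b - a)"
    using param_of_aff[OF v] by blast
  obtain p' q' where pq': "P = c + of_real p' * (d - c)" "Q = c + of_real q' * (d - c)"
    using param_of_aff[OF w] by blast
  have ne: "q' - p' \<noteq> 0" using PQ pq' by auto
  have QP: "Q - P = of_real (q' - p') * (d - c)" by (subst pq'(1), subst pq'(2)) (simp add: algebra_simps)
  have dc: "of_real (1/(q'-p')) * (Q - P) = d - c" unfolding QP using ne
    by (simp add: mult.assoc[symmetric] of_real_mult[symmetric])
  have "c = P - of_real p' * (d - c)" using pq'(1) by simp
  also have "\<dots> = P - of_real p' * (of_real (1/(q'-p')) * (Q - P))" using dc by simp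
  also have "\<dots> = P - of_real (p' / (q' - p')) * (Q - P)" by simp
  finally have "c = P - of_real (p' / (q' - p')) * (Q - P)" .
  also have "\<dots> = (a + of_real p * (b-a)) - of_real (p' / (q' - p')) * ((a + of_real q * (b-a)) - (a + of_real p * (b-a)))"
    by (simp only: pq(1)[symmetric] pq(2)[symmetric])
  also have "\<dots> = a + of_real (p - (p' / (q' - p')) * (q - p)) * (b - a)"
  proof -
    have "\<And>k::real. (a + of_real p * (b-a)) - of_real k * ((a + of_real q * (b-a)) - (a + of_real p * (b-a)))
        = a + of_real (p - k * (q - p)) * (b - a)" by (simp add: algebra_simps)
    then show ?thesis by blast
  qed
  finally have c0: "c = a + of_real (p - (p' / (q' - p')) * (q - p)) * (b - a)" .
  define lam where "lam = p - (p' / (q' - p')) * (q - p)"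
  have c: "c = a + of_real lam * (b - a)" using c0 lam_def by simp
  have "cmod c = 1" "cmod a = 1" "cmod b = 1" "a \<noteq> b" using v w unfolding vp_def S1_iff by auto
  then have "lam = 0 \<or> lam = 1" using chord_unit c by metis
  then show ?thesis
  proof
    assume "lam = 0"
    then have "c = a" using c by simp
    then show ?thesis by simp
  next
    assume "lam = 1"
    then have "c = b" using c by simp
    then show ?thesis by simp
  qed
qed

lemma vp_exists:
  assumes P: "cmod P < 1" and Q: "cmod Q < 1" and PQ: "P \<noteq> Q"
  shows "\<exists>a b. vp P Q a b"
proof -
  define d where "d = Q - P"
  have d0: "d \<noteq> 0" using PQ d_def by simp
  define g where "g = (\<lambda>l::real. cmod (P + of_real l * d))"
  have cg: "continuous_on {0 .. 2 / cmod d} g" unfolding g_def by (intro continuous_intros)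
  have g0: "g 0 \<le> 1" using P g_def by simp
  have g2: "1 \<le> g (2 / cmod d)"
  proof -
    have "cmod (of_real (2 / cmod d) * d) = \<bar>2 / cmod d\<bar> * cmod d" by (simp only: norm_mult norm_of_real)
    also have "\<dots> = 2" using d0 by simp
    finally have "cmod (of_real (2 / cmod d) * d) = 2" .
    then have "2 - cmod P \<le> g (2 / cmod d)" unfolding g_def
      by (metis norm_diff_ineq add.commute add_diff_cancel_left' norm_minus_commute)
    then show ?thesis using P by simp
  qed
  obtain l where l: "0 \<le> l" "g l = 1" using IVT'[OF g0 g2 _ cg] d0 by auto
  define a where "a = P + of_real l * d"
  have au: "cmod a = 1" using l a_def g_def by simp
  have l0: "l \<noteq> 0" using l P g_def by auto
  define b where "b = sec P a"
  have bu: "cmod b = 1" unfolding b_def by (rule sec_unit[OF P au])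
  have ba: "b \<noteq> a" unfolding b_def by (rule sec_ne[OF P au])
  have t: "tpar P a > 1" by (rule tpar_gt1[OF P au])
  have Pin: "P = a + of_real (1 / tpar P a) * (b - a)"
    using sec_X[OF P au] b_def by (simp add: algebra_simps)
  have "Q = P + d" using d_def by simp
  also have "d = of_real (1 / l) * (a - P)" using a_def l0 by simp
  finally have "Q = P + of_real (1 / l) * (a - P)" .
  also have "a - P = of_real (- 1 / tpar P a) * (b - a)" using Pin by (simp add: algebra_simps)
  finally have "Q = P + of_real (1 / l) * (of_real (- 1 / tpar P a) * (b - a))" .
  then have "Q = a + of_real (1 / tpar P a - 1 / (l * tpar P a)) * (b - a)"
    using Pin by (simp add: algebra_simps)
  then have "Q \<in> affine hull {a, b}" "P \<in> affine hull {a, b}" using Pin unfolding aff2 by blast+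
  then have "vp P Q a b" unfolding vp_def S1_iff using au bu ba by auto
  then show ?thesis by blast
qed

lemma dprime_EE:
  assumes P: "cmod P < 1" and Q: "cmod Q < 1" and PQ: "P \<noteq> Q" and v: "vp P Q a b"
  shows "dprime P Q = EE a b P Q"
proof -
  obtain v1 v2 where ce: "chord_ends P Q = (v1, v2)" by (cases "chord_ends P Q") auto
  have "\<exists>x. (case x of (v1, v2) \<Rightarrow> v1 \<in> S1 \<and> v2 \<in> S1 \<and> v1 \<noteq> v2 \<and> {P, Q} \<subseteq> affine hull {v1, v2})"
    using v unfolding vp_def by (intro exI[of _ "(a, b)"]) simp
  then have "(case chord_ends P Q of (v1, v2) \<Rightarrow> v1 \<in> S1 \<and> v2 \<in> S1 \<and> v1 \<noteq> v2 \<and> {P, Q} \<subseteq> affine hull {v1, v2})"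
    unfolding chord_ends_def by (rule someI_ex)
  then have w: "vp P Q v1 v2" using ce unfolding vp_def by simp
  have d: "dprime P Q = EE v1 v2 P Q" unfolding dprime_def ce EE_def by simp
  have 1: "v1 \<in> {a, b}" by (rule vp_same[OF v w PQ])
  have 2: "v2 \<in> {a, b}" by (rule vp_same[OF v vp_sym[OF w] PQ])
  have ne: "v1 \<noteq> v2" using w vp_def by simp
  have au: "cmod a = 1" "cmod b = 1" using v unfolding vp_def S1_iff by auto
  have nP: "P \<noteq> a" "P \<noteq> b" "Q \<noteq> a" "Q \<noteq> b" using au P Q by auto
  show ?thesis
  proof (cases "v1 = a")
    case True then have "v2 = b" using 2 ne by auto
    then show ?thesis using d True by simp
  next
    case False then have "v1 = b" "v2 = a" using 1 2 ne by auto
    then show ?thesis using d EE_swap[OF nP] by simp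
  qed
qed

lemma dprime_sym:
  assumes P: "cmod P < 1" and Q: "cmod Q < 1" and PQ: "P \<noteq> Q"
  shows "dprime Q P = dprime P Q"
proof -
  obtain a b where v: "vp P Q a b" using vp_exists[OF P Q PQ] by blast
  have v': "vp Q P a b" using v unfolding vp_def by (simp add: insert_commute)
  obtain p q where pq: "P = a + of_real p * (b - a)" "Q = a + of_real q * (b - a)"
    using param_of_aff[OF v] by blast
  have au: "cmod a = 1" "cmod b = 1" "a \<noteq> b" using v unfolding vp_def S1_iff by auto
  have p: "0 < p \<and> p < 1" using chord_in[OF au] pq P by metis
  have q: "0 < q \<and> q < 1" using chord_in[OF au] pq Q by metis
  have "dprime Q P = \<bar>ln (p * (1 - q) / (q * (1 - p)))\<bar> / 2"
    using dprime_EE[OF Q P PQ[symmetric] v'] EE_param[OF au pq(2,1)] p q by simp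
  also have "p * (1 - q) / (q * (1 - p)) = inverse (q * (1 - p) / (p * (1 - q)))" by simp
  also have "\<bar>ln (inverse (q * (1 - p) / (p * (1 - q))))\<bar> = \<bar>ln (q * (1 - p) / (p * (1 - q)))\<bar>"
    using p q by (subst ln_inverse) auto
  also have "\<bar>ln (q * (1 - p) / (p * (1 - q)))\<bar> / 2 = dprime P Q"
    using dprime_EE[OF P Q PQ v] EE_param[OF au pq] p q by simp
  finally show ?thesis .
qed



lemma alg_norm:
  fixes x y s m d :: real
  assumes d: "d = 1 + s * x" "d \<noteq> 0" and m: "m^2 = 1 - s^2"
  shows "((x + s) / d)^2 + (m * y / d)^2 - 1 = (1 - s^2) * (x^2 + y^2 - 1) / d^2"
proof -
  have "((x + s) / d)^2 + (m * y / d)^2 - 1 = ((x + s)^2 + m^2 * y^2 - d^2) / d^2"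
    using d(2) by (simp add: field_simps power2_eq_square)
  also have "(x + s)^2 + m^2 * y^2 - d^2 = (1 - s^2) * (x^2 + y^2 - 1)"
    unfolding m d(1) by (simp add: power2_eq_square algebra_simps)
  finally show ?thesis .
qed

lemma alg_inv:
  fixes x y s m :: real
  assumes d: "1 + s * x \<noteq> 0" and m: "m^2 = 1 - s^2" and s: "s^2 < 1"
  shows "((x + s) / (1 + s * x) + (- s)) / (1 + (- s) * ((x + s) / (1 + s * x))) = x"
    and "m * (m * y / (1 + s * x)) / (1 + (- s) * ((x + s) / (1 + s * x))) = y"
proof -
  have e: "1 + (- s) * ((x + s) / (1 + s * x)) = (1 - s^2) / (1 + s * x)"
    using d by (simp add: field_simps power2_eq_square)
  have ne: "1 - s^2 \<noteq> 0" using s by simp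
  have n: "(x + s) / (1 + s * x) + (- s) = x * (1 - s^2) / (1 + s * x)"
    using d by (simp add: field_simps power2_eq_square)
  show "((x + s) / (1 + s * x) + (- s)) / (1 + (- s) * ((x + s) / (1 + s * x))) = x"
    unfolding e n using d ne by simp
  have f0: "\<And>dd. dd \<noteq> 0 \<Longrightarrow> m * (m * y / dd) / ((1 - s^2) / dd) = m^2 * y / (1 - s^2)"
    by (simp add: power2_eq_square)
  have f: "m * (m * y / (1 + s * x)) / ((1 - s^2) / (1 + s * x)) = m^2 * y / (1 - s^2)"
    by (rule f0[OF d])
  show "m * (m * y / (1 + s * x)) / (1 + (- s) * ((x + s) / (1 + s * x))) = y"
    unfolding e f m using ne by simp
qed

lemma alg_cross0:
  fixes x1 y1 x2 y2 x3 y3 s m d1 d2 d3 :: real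
  assumes d1: "d1 = 1 + s * x1" "d1 \<noteq> 0" and d2: "d2 = 1 + s * x2" "d2 \<noteq> 0"
    and d3: "d3 = 1 + s * x3" "d3 \<noteq> 0"
  shows "((x2 + s) / d2 - (x1 + s) / d1) * (m * y3 / d3 - m * y1 / d1)
       - (m * y2 / d2 - m * y1 / d1) * ((x3 + s) / d3 - (x1 + s) / d1)
     = m * (1 - s^2) / (d1 * d2 * d3) * ((x2 - x1) * (y3 - y1) - (y2 - y1) * (x3 - x1))"
proof -
  have h1: "(x2 + s) / d2 - (x1 + s) / d1 = (x2 - x1) * (1 - s^2) / (d1 * d2)"
    using d1 d2 by (simp add: field_simps power2_eq_square)
  have h2: "(x3 + s) / d3 - (x1 + s) / d1 = (x3 - x1) * (1 - s^2) / (d1 * d3)"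
    using d1 d3 by (simp add: field_simps power2_eq_square)
  have h3: "m * y3 / d3 - m * y1 / d1 = m * (y3 * d1 - y1 * d3) / (d1 * d3)"
    using d1 d3 by (simp add: field_simps)
  have h4: "m * y2 / d2 - m * y1 / d1 = m * (y2 * d1 - y1 * d2) / (d1 * d2)"
    using d1 d2 by (simp add: field_simps)
  have br: "(x2 - x1) * (y3 * d1 - y1 * d3) - (y2 * d1 - y1 * d2) * (x3 - x1)
      = d1 * ((x2 - x1) * (y3 - y1) - (y2 - y1) * (x3 - x1))"
    unfolding d1(1) d2(1) d3(1) by (simp add: algebra_simps)
  have fc: "\<And>a b c e. a/(d1*d2) * (b/(d1*d3)) - c/(d1*d2) * (e/(d1*d3)) = (a*b - c*e)/(d1*d1*d2*d3)"
    by (simp add: times_divide_times_eq diff_divide_distrib mult_ac)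
  have ab: "(x2 - x1) * (1 - s^2) * (m * (y3 * d1 - y1 * d3)) - m * (y2 * d1 - y1 * d2) * ((x3 - x1) * (1 - s^2))
     = (1 - s^2) * m * ((x2 - x1) * (y3 * d1 - y1 * d3) - (y2 * d1 - y1 * d2) * (x3 - x1))"
    by (simp add: algebra_simps)
  have "((x2 + s) / d2 - (x1 + s) / d1) * (m * y3 / d3 - m * y1 / d1)
       - (m * y2 / d2 - m * y1 / d1) * ((x3 + s) / d3 - (x1 + s) / d1)
      = (1 - s^2) * m * (d1 * ((x2 - x1) * (y3 - y1) - (y2 - y1) * (x3 - x1))) / (d1 * d1 * d2 * d3)"
    unfolding h1 h2 h3 h4 fc ab br by simp
  also have "\<dots> = m * (1 - s^2) / (d1 * d2 * d3) * ((x2 - x1) * (y3 - y1) - (y2 - y1) * (x3 - x1))"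
    using d1(2) d2(2) d3(2) by (simp add: field_simps)
  finally show ?thesis .
qed

lemma alg_param0:
  fixes a b du dv p A B :: real
  assumes du: "du > 0" and dv: "dv > 0" and p: "0 \<le> p" "p \<le> 1"
  defines "D \<equiv> (1 - p) * du + p * dv"
  defines "q \<equiv> p * dv / D"
  shows "((1 - p) * A + p * B) / D = A / du + q * (B / dv - A / du)"
proof -
  have Dp: "D > 0" unfolding D_def using du dv p by (smt (verit) mult_nonneg_nonneg mult_pos_pos)
  have q1: "1 - q = (1 - p) * du / D" unfolding q_def using Dp by (simp add: field_simps D_def)
  have g: "\<And>X Y. X + q * (Y - X) = (1 - q) * X + q * Y" by (simp add: algebra_simps)
  have "A / du + q * (B / dv - A / du) = (1 - q) * (A / du) + q * (B / dv)" by (rule g)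
  also have "(1 - q) * (A / du) = (1 - p) * A / D" unfolding q1 using du by simp
  also have "q * (B / dv) = p * B / D" unfolding q_def using dv by simp
  also have "(1 - p) * A / D + p * B / D = ((1 - p) * A + p * B) / D" by (simp add: add_divide_distrib)
  finally show ?thesis by simp
qed

lemma alg_param:
  fixes ux uy vx vy s m p :: real
  assumes du: "1 + s * ux > 0" and dv: "1 + s * vx > 0" and p: "0 \<le> p" "p \<le> 1"
  defines "q \<equiv> p * (1 + s * vx) / ((1 - p) * (1 + s * ux) + p * (1 + s * vx))"
  shows "(ux + p * (vx - ux) + s) / (1 + s * (ux + p * (vx - ux))) =
           (ux + s) / (1 + s * ux) + q * ((vx + s) / (1 + s * vx) - (ux + s) / (1 + s * ux))"
    and "m * (uy + p * (vy - uy)) / (1 + s * (ux + p * (vx - ux))) =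
           m * uy / (1 + s * ux) + q * (m * vy / (1 + s * vx) - m * uy / (1 + s * ux))"
proof -
  have e: "1 + s * (ux + p * (vx - ux)) = (1 - p) * (1 + s * ux) + p * (1 + s * vx)"
    by (simp add: algebra_simps)
  have n1: "ux + p * (vx - ux) + s = (1 - p) * (ux + s) + p * (vx + s)" by (simp add: algebra_simps)
  have n2: "m * (uy + p * (vy - uy)) = (1 - p) * (m * uy) + p * (m * vy)" by (simp add: algebra_simps)
  show "(ux + p * (vx - ux) + s) / (1 + s * (ux + p * (vx - ux))) =
           (ux + s) / (1 + s * ux) + q * ((vx + s) / (1 + s * vx) - (ux + s) / (1 + s * ux))"
    unfolding e n1 q_def by (rule alg_param0[OF du dv p])
  show "m * (uy + p * (vy - uy)) / (1 + s * (ux + p * (vx - ux))) =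
           m * uy / (1 + s * ux) + q * (m * vy / (1 + s * vx) - m * uy / (1 + s * ux))"
    unfolding e n2 q_def by (rule alg_param0[OF du dv p])
qed


definition trh :: "real \<Rightarrow> complex \<Rightarrow> complex" where
  "trh s z = Complex ((Re z + s) / (1 + s * Re z)) (sqrt (1 - s^2) * Im z / (1 + s * Re z))"

lemma re_bound: "cmod z \<le> 1 \<Longrightarrow> \<bar>Re z\<bar> \<le> 1"
  using abs_Re_le_cmod order_trans by blast

lemma den_pos: "\<bar>s\<bar> < 1 \<Longrightarrow> cmod z \<le> 1 \<Longrightarrow> 1 + s * Re z > 0"
proof -
  assume s: "\<bar>s\<bar> < 1" and z: "cmod z \<le> 1"
  have "\<bar>s\<bar> * \<bar>Re z\<bar> \<le> \<bar>s\<bar> * 1" using re_bound[OF z] by (intro mult_left_mono) auto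
  then have "\<bar>s * Re z\<bar> < 1" using s by (simp add: abs_mult)
  then show ?thesis by linarith
qed

definition kmap :: "(complex \<Rightarrow> complex) \<Rightarrow> bool" where
  "kmap K \<longleftrightarrow> (\<forall>z. cmod z < 1 \<longrightarrow> cmod (K z) < 1) \<and> (\<forall>z. cmod z = 1 \<longrightarrow> cmod (K z) = 1) \<and>
    (\<forall>u v w. cmod u \<le> 1 \<longrightarrow> cmod v \<le> 1 \<longrightarrow> cmod w \<le> 1 \<longrightarrow>
       (\<exists>l>0. cross (K v - K u) (K w - K u) = l * cross (v - u) (w - u))) \<and>
    (\<forall>u v. cmod u \<le> 1 \<longrightarrow> cmod v \<le> 1 \<longrightarrow> (\<exists>al>0. \<exists>be>0. \<forall>p. 0 \<le> p \<and> p \<le> 1 \<longrightarrow>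
       K (u + of_real p * (v - u)) = K u + of_real (p * be / ((1 - p) * al + p * be)) * (K v - K u))) \<and>
    (\<exists>K'. (\<forall>z. cmod z < 1 \<longrightarrow> cmod (K' z) < 1) \<and> (\<forall>z. cmod z = 1 \<longrightarrow> cmod (K' z) = 1) \<and>
       (\<forall>z. cmod z \<le> 1 \<longrightarrow> K (K' z) = z \<and> K' (K z) = z))"

lemma trh_norm:
  assumes s: "\<bar>s\<bar> < 1" and d: "1 + s * Re z \<noteq> 0"
  shows "(Re (trh s z))^2 + (Im (trh s z))^2 - 1 = (1 - s^2) * ((Re z)^2 + (Im z)^2 - 1) / (1 + s * Re z)^2"
proof -
  have m: "(sqrt (1 - s^2))^2 = 1 - s^2" using s by (simp add: abs_square_less_1 less_imp_le)
  show ?thesis unfolding trh_def using alg_norm[OF refl d m] by simp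
qed

lemma trh_disk:
  assumes s: "\<bar>s\<bar> < 1" and z: "cmod z \<le> 1"
  shows "(cmod z < 1 \<longrightarrow> cmod (trh s z) < 1) \<and> (cmod z = 1 \<longrightarrow> cmod (trh s z) = 1)"
proof -
  have d: "1 + s * Re z > 0" by (rule den_pos[OF s z])
  have s2: "1 - s^2 > 0" using s by (simp add: abs_square_less_1)
  have e: "(Re (trh s z))^2 + (Im (trh s z))^2 - 1 = (1 - s^2) * ((Re z)^2 + (Im z)^2 - 1) / (1 + s * Re z)^2"
    using trh_norm[OF s] d by simp
  show ?thesis
  proof (intro conjI impI)
    assume "cmod z < 1"
    then have "(Re z)^2 + (Im z)^2 - 1 < 0" using disk_iff by simp
    then have "(1 - s^2) * ((Re z)^2 + (Im z)^2 - 1) / (1 + s * Re z)^2 < 0"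
      using s2 d by (simp add: mult_pos_neg divide_neg_pos)
    then show "cmod (trh s z) < 1" using e disk_iff by simp
  next
    assume "cmod z = 1"
    then have "(Re z)^2 + (Im z)^2 - 1 = 0" using unit_iff by simp
    then show "cmod (trh s z) = 1" using e unit_iff by simp
  qed
qed

lemma trh_inv:
  assumes s: "\<bar>s\<bar> < 1" and d: "1 + s * Re z \<noteq> 0"
  shows "trh (- s) (trh s z) = z"
proof -
  have m: "(sqrt (1 - s^2))^2 = 1 - s^2" using s by (simp add: abs_square_less_1 less_imp_le)
  have s2: "s^2 < 1" using s by (simp add: abs_square_less_1)
  note i1 = alg_inv(1)[OF d m s2]
  note i2 = alg_inv(2)[OF d m s2, of "Im z"]
  show ?thesis unfolding trh_def using i1 i2 by (simp add: complex_eq_iff)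
qed

lemma kmap_trh:
  assumes s: "\<bar>s\<bar> < 1"
  shows "kmap (trh s)"
proof -
  define m where "m = sqrt (1 - s^2)"
  have m2: "m^2 = 1 - s^2" unfolding m_def using s by (simp add: abs_square_less_1 less_imp_le)
  have mp: "m > 0" unfolding m_def using s by (simp add: abs_square_less_1)
  have s2: "1 - s^2 > 0" using s by (simp add: abs_square_less_1)
  have s': "\<bar>- s\<bar> < 1" using s by simp
  have ReK: "\<And>z. Re (trh s z) = (Re z + s) / (1 + s * Re z)" by (simp add: trh_def)
  have ImK: "\<And>z. Im (trh s z) = m * Im z / (1 + s * Re z)" by (simp add: trh_def m_def)
  show ?thesis unfolding kmap_def
  proof (intro conjI allI impI)
    fix z :: complex assume "cmod z < 1" then show "cmod (trh s z) < 1" using trh_disk[OF s] by simp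
  next
    fix z :: complex assume "cmod z = 1" then show "cmod (trh s z) = 1" using trh_disk[OF s] by simp
  next
    fix u v w :: complex assume u: "cmod u \<le> 1" and v: "cmod v \<le> 1" and w: "cmod w \<le> 1"
    have du: "1 + s * Re u > 0" by (rule den_pos[OF s u])
    have dv: "1 + s * Re v > 0" by (rule den_pos[OF s v])
    have dw: "1 + s * Re w > 0" by (rule den_pos[OF s w])
    have e0: "((Re v + s) / (1 + s*Re v) - (Re u + s)/(1 + s*Re u)) * (m*Im w/(1+s*Re w) - m*Im u/(1+s*Re u))
       - (m*Im v/(1+s*Re v) - m*Im u/(1+s*Re u))*((Re w + s)/(1+s*Re w) - (Re u + s)/(1+s*Re u))
       = m*(1-s^2)/((1+s*Re u)*(1+s*Re v)*(1+s*Re w)) * ((Re v - Re u)*(Im w - Im u) - (Im v - Im u)*(Re w - Re u))"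
      by (rule alg_cross0) (use du dv dw in auto)
    have e: "cross (trh s v - trh s u) (trh s w - trh s u) =
      m * (1 - s^2) / ((1 + s * Re u) * (1 + s * Re v) * (1 + s * Re w)) * cross (v - u) (w - u)"
      unfolding cross_alt using e0 by (simp add: ReK ImK)
    have "m * (1 - s^2) / ((1 + s * Re u) * (1 + s * Re v) * (1 + s * Re w)) > 0"
      using mp s2 du dv dw by simp
    then show "\<exists>l>0. cross (trh s v - trh s u) (trh s w - trh s u) = l * cross (v - u) (w - u)"
      using e by blast
  next
    fix u v :: complex assume u: "cmod u \<le> 1" and v: "cmod v \<le> 1"
    have du: "1 + s * Re u > 0" by (rule den_pos[OF s u])
    have dv: "1 + s * Re v > 0" by (rule den_pos[OF s v])
    have key: "\<forall>p. 0 \<le> p \<and> p \<le> 1 \<longrightarrow> trh s (u + of_real p * (v - u)) = trh s u + of_real (p * (1 + s * Re v) / ((1 - p) * (1 + s * Re u) + p * (1 + s * Re v))) * (trh s v - trh s u)"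
    proof (intro allI impI)
      fix p :: real assume p: "0 \<le> p \<and> p \<le> 1"
      note a1 = alg_param(1)[OF du dv conjunct1[OF p] conjunct2[OF p]]
      note a2 = alg_param(2)[OF du dv conjunct1[OF p] conjunct2[OF p], where m=m and uy="Im u" and vy="Im v"]
      show "trh s (u + of_real p * (v - u)) = trh s u + of_real (p * (1 + s * Re v) / ((1 - p) * (1 + s * Re u) + p * (1 + s * Re v))) * (trh s v - trh s u)"
        using a1 a2 by (simp add: complex_eq_iff ReK ImK)
    qed
    show "\<exists>al>0. \<exists>be>0. \<forall>p. 0 \<le> p \<and> p \<le> 1 \<longrightarrow>
       trh s (u + of_real p * (v - u)) = trh s u + of_real (p * be / ((1 - p) * al + p * be)) * (trh s v - trh s u)"
      using key du dv by blast
  next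
    show "\<exists>K'. (\<forall>z. cmod z < 1 \<longrightarrow> cmod (K' z) < 1) \<and> (\<forall>z. cmod z = 1 \<longrightarrow> cmod (K' z) = 1) \<and>
       (\<forall>z. cmod z \<le> 1 \<longrightarrow> trh s (K' z) = z \<and> K' (trh s z) = z)"
    proof (intro exI[of _ "trh (- s)"] conjI allI impI)
      fix z :: complex assume "cmod z < 1" then show "cmod (trh (- s) z) < 1" using trh_disk[OF s'] by simp
    next
      fix z :: complex assume "cmod z = 1" then show "cmod (trh (- s) z) = 1" using trh_disk[OF s'] by simp
    next
      fix z :: complex assume z: "cmod z \<le> 1"
      have "1 + (- s) * Re z > 0" by (rule den_pos[OF s' z])
      then show "trh s (trh (- s) z) = z" using trh_inv[OF s', of z] by simp
    next
      fix z :: complex assume z: "cmod z \<le> 1"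
      have "1 + s * Re z > 0" by (rule den_pos[OF s z])
      then show "trh (- s) (trh s z) = z" using trh_inv[OF s, of z] by simp
    qed
  qed
qed

lemma cross_rot: "cmod w = 1 \<Longrightarrow> cross (w * a) (w * b) = cross a b"
proof -
  assume w: "cmod w = 1"
  have wc: "cnj w * w = 1" using w by (metis complex_norm_square mult.commute of_real_1 one_power2)
  have "cnj (w * a) * (w * b) = (cnj w * w) * (cnj a * b)" by (simp add: mult_ac)
  also have "\<dots> = cnj a * b" by (simp only: wc mult_1)
  finally have eq: "cnj (w * a) * (w * b) = cnj a * b" .
  show ?thesis unfolding cross_def by (simp only: eq)
qed

lemma kmap_rot:
  assumes w: "cmod w = 1"
  shows "kmap (\<lambda>z. w * z)"
  unfolding kmap_def
proof (intro conjI allI impI)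
  fix z :: complex assume "cmod z < 1" then show "cmod (w * z) < 1" using w by (simp add: norm_mult)
next
  fix z :: complex assume "cmod z = 1" then show "cmod (w * z) = 1" using w by (simp add: norm_mult)
next
  fix u v x :: complex
  have "cross (w * v - w * u) (w * x - w * u) = 1 * cross (v - u) (x - u)"
    using cross_rot[OF w, of "v - u" "x - u"] by (simp add: right_diff_distrib)
  then show "\<exists>l>0. cross (w * v - w * u) (w * x - w * u) = l * cross (v - u) (x - u)"
    by (intro exI[of _ "1::real"]) simp
next
  fix u v :: complex
  show "\<exists>al>0. \<exists>be>0. \<forall>p. 0 \<le> p \<and> p \<le> 1 \<longrightarrow>
       w * (u + of_real p * (v - u)) = w * u + of_real (p * be / ((1 - p) * al + p * be)) * (w * v - w * u)"
    by (intro exI[of _ 1] conjI allI impI) (auto simp: algebra_simps)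
next
  have wc: "cnj w * w = 1" using w by (metis complex_norm_square mult.commute of_real_1 one_power2)
  show "\<exists>K'. (\<forall>z. cmod z < 1 \<longrightarrow> cmod (K' z) < 1) \<and> (\<forall>z. cmod z = 1 \<longrightarrow> cmod (K' z) = 1) \<and>
       (\<forall>z. cmod z \<le> 1 \<longrightarrow> w * K' z = z \<and> K' (w * z) = z)"
    by (intro exI[of _ "\<lambda>z. cnj w * z"]) (auto simp: norm_mult w mult.assoc[symmetric] wc mult.commute[of w "cnj w"])
qed



lemma kmap_D: "kmap K \<Longrightarrow> cmod z < 1 \<Longrightarrow> cmod (K z) < 1" unfolding kmap_def by blast
lemma kmap_S: "kmap K \<Longrightarrow> cmod z = 1 \<Longrightarrow> cmod (K z) = 1" unfolding kmap_def by blast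
lemma kmap_cl: "kmap K \<Longrightarrow> cmod z \<le> 1 \<Longrightarrow> cmod (K z) \<le> 1"
  using kmap_D kmap_S by (metis order_le_less)
lemma kmap_cross: "kmap K \<Longrightarrow> cmod u \<le> 1 \<Longrightarrow> cmod v \<le> 1 \<Longrightarrow> cmod w \<le> 1 \<Longrightarrow>
   \<exists>l>0. cross (K v - K u) (K w - K u) = l * cross (v - u) (w - u)"
  unfolding kmap_def by blast
lemma kmap_param: "kmap K \<Longrightarrow> cmod u \<le> 1 \<Longrightarrow> cmod v \<le> 1 \<Longrightarrow> \<exists>al>0. \<exists>be>0. \<forall>p. 0 \<le> p \<and> p \<le> 1 \<longrightarrow>
       K (u + of_real p * (v - u)) = K u + of_real (p * be / ((1 - p) * al + p * be)) * (K v - K u)"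
  unfolding kmap_def by blast
lemma kmap_inv: "kmap K \<Longrightarrow> \<exists>K'. (\<forall>z. cmod z < 1 \<longrightarrow> cmod (K' z) < 1) \<and> (\<forall>z. cmod z = 1 \<longrightarrow> cmod (K' z) = 1) \<and>
       (\<forall>z. cmod z \<le> 1 \<longrightarrow> K (K' z) = z \<and> K' (K z) = z)"
  unfolding kmap_def by blast

lemma kmap_inj: "kmap K \<Longrightarrow> cmod a \<le> 1 \<Longrightarrow> cmod b \<le> 1 \<Longrightarrow> K a = K b \<Longrightarrow> a = b"
  using kmap_inv by metis

lemma kmap_sec:
  assumes K: "kmap K" and X: "cmod X < 1" and c: "cmod c = 1"
  shows "K (sec X c) = sec (K X) (K c)"
proof (rule sec_unique)
  show "cmod (K X) < 1" by (rule kmap_D[OF K X])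
  show "cmod (K c) = 1" by (rule kmap_S[OF K c])
  show "cmod (K (sec X c)) = 1" by (rule kmap_S[OF K sec_unit[OF X c]])
  show "K (sec X c) \<noteq> K c"
  proof
    assume "K (sec X c) = K c"
    then have "sec X c = c" using kmap_inj[OF K] sec_unit[OF X c] c by simp
    then show False using sec_ne[OF X c] by simp
  qed
  obtain l where l: "l > 0" "cross (K X - K c) (K (sec X c) - K c) = l * cross (X - c) (sec X c - c)"
    using kmap_cross[OF K, of c X "sec X c"] c X sec_unit[OF X c] by auto
  then show "cross (K X - K c) (K (sec X c) - K c) = 0" using sec_cross[OF X c] by simp
qed

lemma alg_ratio:
  fixes al be p q :: real
  assumes al: "al > 0" and be: "be > 0" and p: "0 < p" "p < 1" and q: "0 < q" "q < 1"
  defines "p' \<equiv> p * be / ((1 - p) * al + p * be)" and "q' \<equiv> q * be / ((1 - q) * al + q * be)"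
  shows "q' * (1 - p') / (p' * (1 - q')) = q * (1 - p) / (p * (1 - q))"
    and "0 < p' \<and> p' < 1"
proof -
  define Dp where "Dp = (1 - p) * al + p * be"
  define Dq where "Dq = (1 - q) * al + q * be"
  have Dp: "Dp > 0" unfolding Dp_def using al be p by (smt (verit) mult_pos_pos)
  have Dq: "Dq > 0" unfolding Dq_def using al be q by (smt (verit) mult_pos_pos)
  have p1: "1 - p' = (1 - p) * al / Dp" unfolding p'_def Dp_def[symmetric] using Dp by (simp add: field_simps Dp_def)
  have q1: "1 - q' = (1 - q) * al / Dq" unfolding q'_def Dq_def[symmetric] using Dq by (simp add: field_simps Dq_def)
  have "q' * (1 - p') / (p' * (1 - q')) = (q * be / Dq) * ((1 - p) * al / Dp) / ((p * be / Dp) * ((1 - q) * al / Dq))"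
    unfolding p1 q1 unfolding p'_def q'_def Dp_def Dq_def by simp
  also have "(q * be / Dq) * ((1 - p) * al / Dp) = (q * (1 - p) * (be * al)) / (Dp * Dq)"
    using Dp Dq by (simp add: field_simps)
  also have "(p * be / Dp) * ((1 - q) * al / Dq) = (p * (1 - q) * (be * al)) / (Dp * Dq)"
    using Dp Dq by (simp add: field_simps)
  also have "(q * (1 - p) * (be * al)) / (Dp * Dq) / ((p * (1 - q) * (be * al)) / (Dp * Dq))
     = (q * (1 - p) * (be * al)) / (p * (1 - q) * (be * al))"
    using Dp Dq by simp
  also have "\<dots> = q * (1 - p) / (p * (1 - q))"
    by (rule mult_divide_mult_cancel_right) (use al be in simp)
  finally show "q' * (1 - p') / (p' * (1 - q')) = q * (1 - p) / (p * (1 - q))" .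
  have "p' > 0" unfolding p'_def Dp_def[symmetric] using Dp p be by simp
  moreover have "1 - p' > 0" unfolding p1 using p al Dp by simp
  ultimately show "0 < p' \<and> p' < 1" by simp
qed

lemma kmap_dprime:
  assumes K: "kmap K" and P: "cmod P < 1" and Q: "cmod Q < 1" and PQ: "P \<noteq> Q"
  shows "dprime (K P) (K Q) = dprime P Q"
proof -
  obtain a b where v: "vp P Q a b" using vp_exists[OF P Q PQ] by blast
  obtain p q where pq: "P = a + of_real p * (b - a)" "Q = a + of_real q * (b - a)"
    using param_of_aff[OF v] by blast
  have au: "cmod a = 1" "cmod b = 1" "a \<noteq> b" using v unfolding vp_def S1_iff by auto
  have p: "0 < p \<and> p < 1" using chord_in[OF au] pq P by metis
  have q: "0 < q \<and> q < 1" using chord_in[OF au] pq Q by metis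
  obtain al be where ab: "al > 0" "be > 0" and M: "\<forall>p. 0 \<le> p \<and> p \<le> 1 \<longrightarrow>
       K (a + of_real p * (b - a)) = K a + of_real (p * be / ((1 - p) * al + p * be)) * (K b - K a)"
    using kmap_param[OF K, of a b] au by auto
  define p' where "p' = p * be / ((1 - p) * al + p * be)"
  define q' where "q' = q * be / ((1 - q) * al + q * be)"
  have KP: "K P = K a + of_real p' * (K b - K a)" using M p pq(1) p'_def by simp
  have KQ: "K Q = K a + of_real q' * (K b - K a)" using M q pq(2) q'_def by simp
  have r: "q' * (1 - p') / (p' * (1 - q')) = q * (1 - p) / (p * (1 - q))"
    using alg_ratio(1)[OF ab] p q unfolding p'_def q'_def by blast
  have p': "0 < p' \<and> p' < 1" using alg_ratio(2)[OF ab, of p q] p q unfolding p'_def by blast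
  have q': "0 < q' \<and> q' < 1" using alg_ratio(2)[OF ab, of q p] p q unfolding q'_def by blast
  have Kau: "cmod (K a) = 1" "cmod (K b) = 1" using kmap_S[OF K] au by auto
  have Kab: "K a \<noteq> K b" using kmap_inj[OF K] au by force
  have "K P \<in> affine hull {K a, K b}" unfolding aff2 using KP by blast
  moreover have "K Q \<in> affine hull {K a, K b}" unfolding aff2 using KQ by blast
  ultimately have v': "vp (K P) (K Q) (K a) (K b)"
    unfolding vp_def S1_iff using Kau Kab by simp
  have KPD: "cmod (K P) < 1" "cmod (K Q) < 1" using kmap_D[OF K] P Q by auto
  have KPQ: "K P \<noteq> K Q" using kmap_inj[OF K] P Q PQ by force
  have "dprime (K P) (K Q) = EE (K a) (K b) (K P) (K Q)" by (rule dprime_EE[OF KPD KPQ v'])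
  also have "\<dots> = \<bar>ln (q' * (1 - p') / (p' * (1 - q')))\<bar> / 2"
    using EE_param[OF Kau Kab KP KQ] p' q' by blast
  also have "\<dots> = \<bar>ln (q * (1 - p) / (p * (1 - q)))\<bar> / 2" using r by simp
  also have "\<dots> = EE a b P Q" using EE_param[OF au pq] p q by simp
  also have "\<dots> = dprime P Q" using dprime_EE[OF P Q PQ v] by simp
  finally show ?thesis .
qed

lemma aff_cross:
  assumes "P \<noteq> Q"
  shows "z \<in> affine hull {P, Q} \<longleftrightarrow> cross (Q - P) (z - P) = 0"
proof
  assume "z \<in> affine hull {P, Q}"
  then obtain l where "z = P + of_real l * (Q - P)" unfolding aff2 by blast
  then show "cross (Q - P) (z - P) = 0" by (simp add: xcross_scale_right xcross_self)
next
  assume c: "cross (Q - P) (z - P) = 0"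
  have "Q - P \<noteq> 0" using assms by simp
  from cross_zero_param[OF this c] have "z = P + of_real (Re (cnj (Q - P) * (z - P)) / (cmod (Q - P))^2) * (Q - P)"
    by (metis add.commute diff_add_cancel)
  then show "z \<in> affine hull {P, Q}" unfolding aff2 by blast
qed

definition HH :: "complex \<Rightarrow> complex \<Rightarrow> complex \<Rightarrow> bool" where
  "HH P Q R \<longleftrightarrow> (\<forall>S. S \<in> KD \<and> S \<in> affine hull {P, Q} \<longrightarrow> dprime R S > Deltaprime P Q)"

definition core :: "complex \<Rightarrow> complex \<Rightarrow> complex \<Rightarrow> bool" where
  "core P Q R \<longleftrightarrow> (\<exists>c. cmod c = 1 \<and> cross (Q - P) (c - P) < 0 \<and> cross (sec P c - sec Q c) (R - sec Q c) < 0)"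

definition good :: "complex \<Rightarrow> complex \<Rightarrow> complex \<Rightarrow> bool" where
  "good P Q R \<longleftrightarrow> cmod P < 1 \<and> cmod Q < 1 \<and> cmod R < 1 \<and> cross (Q - P) (R - P) > 0 \<and> HH P Q R"

lemma good_ne: "good P Q R \<Longrightarrow> P \<noteq> Q"
  unfolding good_def by (auto simp: cross_alt)

lemma transfer:
  assumes K: "kmap K" and g: "good P Q R"
  shows "good (K P) (K Q) (K R)" and "core (K P) (K Q) (K R) \<Longrightarrow> core P Q R"
proof -
  have P: "cmod P < 1" and Q: "cmod Q < 1" and R: "cmod R < 1" and o: "cross (Q - P) (R - P) > 0"
    and H: "HH P Q R" using g unfolding good_def by auto
  have PQ: "P \<noteq> Q" by (rule good_ne[OF g])
  have Pc: "cmod P \<le> 1" "cmod Q \<le> 1" "cmod R \<le> 1" using P Q R by auto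
  obtain K' where K'1: "\<forall>z. cmod z < 1 \<longrightarrow> cmod (K' z) < 1" and K'2: "\<forall>z. cmod z = 1 \<longrightarrow> cmod (K' z) = 1"
    and K'3: "\<forall>z. cmod z \<le> 1 \<longrightarrow> K (K' z) = z \<and> K' (K z) = z" using kmap_inv[OF K] by blast
  show "good (K P) (K Q) (K R)"
    unfolding good_def
  proof (intro conjI)
    show "cmod (K P) < 1" "cmod (K Q) < 1" "cmod (K R) < 1" using kmap_D[OF K] P Q R by auto
    obtain l where "l > 0" "cross (K Q - K P) (K R - K P) = l * cross (Q - P) (R - P)"
      using kmap_cross[OF K Pc(1) Pc(2) Pc(3)] by blast
    then show "cross (K Q - K P) (K R - K P) > 0" using o by simp
    show "HH (K P) (K Q) (K R)" unfolding HH_def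
    proof (intro allI impI)
      fix S' assume S': "S' \<in> KD \<and> S' \<in> affine hull {K P, K Q}"
      define S where "S = K' S'"
      have S'd: "cmod S' < 1" using S' KD_iff by blast
      have Sd: "cmod S < 1" using K'1 S'd S_def by blast
      have KS: "K S = S'" using K'3 S'd S_def by simp
      have KPQ: "K P \<noteq> K Q" using kmap_inj[OF K Pc(1) Pc(2)] PQ by blast
      have "cross (K Q - K P) (S' - K P) = 0" using S' aff_cross[OF KPQ] by blast
      moreover obtain l where "l > 0" "cross (K Q - K P) (K S - K P) = l * cross (Q - P) (S - P)"
        using kmap_cross[OF K Pc(1) Pc(2), of S] Sd by auto
      ultimately have "cross (Q - P) (S - P) = 0" using KS by simp
      then have Sin: "S \<in> affine hull {P, Q}" using aff_cross[OF PQ] by blast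
      have RS: "R \<noteq> S"
      proof
        assume "R = S"
        then have "cross (Q - P) (R - P) = 0" using \<open>cross (Q - P) (S - P) = 0\<close> by simp
        then show False using o by simp
      qed
      have "dprime R S > Deltaprime P Q" using H Sin Sd unfolding HH_def KD_iff by blast
      moreover have "dprime (K R) S' = dprime R S" using kmap_dprime[OF K R Sd RS] KS by simp
      moreover have "Deltaprime (K P) (K Q) = Deltaprime P Q"
        unfolding Deltaprime_def using kmap_dprime[OF K P Q PQ] by simp
      ultimately show "dprime (K R) S' > Deltaprime (K P) (K Q)" by simp
    qed
  qed
  assume "core (K P) (K Q) (K R)"
  then obtain c' where c': "cmod c' = 1" "cross (K Q - K P) (c' - K P) < 0"
      "cross (sec (K P) c' - sec (K Q) c') (K R - sec (K Q) c') < 0" unfolding core_def by blast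
  define c where "c = K' c'"
  have cu: "cmod c = 1" using K'2 c' c_def by blast
  have Kc: "K c = c'" using K'3 c' c_def by simp
  have s1: "sec (K P) c' = K (sec P c)" using kmap_sec[OF K P cu] Kc by simp
  have s2: "sec (K Q) c' = K (sec Q c)" using kmap_sec[OF K Q cu] Kc by simp
  obtain l where l: "l > 0" "cross (K Q - K P) (K c - K P) = l * cross (Q - P) (c - P)"
    using kmap_cross[OF K Pc(1) Pc(2), of c] cu by auto
  have o1: "cross (Q - P) (c - P) < 0" using l c'(2) Kc by (simp add: mult_less_0_iff)
  have su: "cmod (sec P c) \<le> 1" "cmod (sec Q c) \<le> 1" using sec_unit[OF P cu] sec_unit[OF Q cu] by auto
  obtain l2 where l2: "l2 > 0" "cross (K (sec P c) - K (sec Q c)) (K R - K (sec Q c)) =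
     l2 * cross (sec P c - sec Q c) (R - sec Q c)"
    using kmap_cross[OF K su(2) su(1) Pc(3)] by blast
  have o2: "cross (sec P c - sec Q c) (R - sec Q c) < 0" using l2 c'(3) s1 s2 by (simp add: mult_less_0_iff)
  show "core P Q R" unfolding core_def using cu o1 o2 by blast
qed



lemma N_pos:
  fixes p t :: real assumes "\<bar>p\<bar> < 1" "\<bar>t\<bar> < 1"
  shows "1 + 2 * p * t + p^2 > 0"
proof -
  have e: "1 + 2 * p * t + p^2 = (p + t)^2 + (1 - t^2)" by (simp add: power2_eq_square algebra_simps)
  have "1 - t^2 > 0" using assms(2) by (simp add: abs_square_less_1)
  then show ?thesis unfolding e by (smt (verit) zero_le_power2)
qed

lemma A2:
  fixes p t k N :: real assumes N: "N = 1 + 2 * p * t + p^2" "N \<noteq> 0" and k: "k^2 = 1 - t^2"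
  shows "((2 * p + (p^2 + 1) * t) / N)^2 + (- k * (1 - p^2) / N)^2 = 1"
proof -
  have "(2 * p + (p^2 + 1) * t)^2 + (k * (1 - p^2))^2 = N^2"
    unfolding N(1) using k by algebra
  then show ?thesis using N(2) by (simp add: power_divide add_divide_distrib[symmetric] power_mult_distrib)
qed

lemma A3:
  fixes p t k N :: real assumes N: "N = 1 + 2 * p * t + p^2" "N \<noteq> 0" and k: "k^2 = 1 - t^2"
  defines "cx \<equiv> (2 * p + (p^2 + 1) * t) / N" and "cy \<equiv> - k * (1 - p^2) / N"
  shows "(p - cx) * (k - cy) - cy * (t + cx) = 0"
proof -
  have "(p - cx) * (k - cy) - cy * (t + cx) = ((p * N - (2 * p + (p^2 + 1) * t)) * (k * N + k * (1 - p^2)) + k * (1 - p^2) * (t * N + (2 * p + (p^2 + 1) * t))) / N^2"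
    unfolding cx_def cy_def using N(2) by (simp add: field_simps power2_eq_square)
  also have "(p * N - (2 * p + (p^2 + 1) * t)) * (k * N + k * (1 - p^2)) + k * (1 - p^2) * (t * N + (2 * p + (p^2 + 1) * t)) = 0"
    unfolding N(1) by (simp add: power2_eq_square algebra_simps)
  finally show ?thesis by simp
qed

lemma A4:
  fixes p q t k N :: real assumes N: "N = 1 + 2 * p * t + p^2" "N \<noteq> 0" and k: "k^2 = 1 - t^2"
    and t: "t = (q - p) / (1 - p * q)" and pq: "1 - p * q \<noteq> 0"
  defines "cx \<equiv> (2 * p + (p^2 + 1) * t) / N" and "cy \<equiv> - k * (1 - p^2) / N"
  shows "(q - cx) * (k - cy) + cy * (t - cx) = 0"
proof -
  have "(q - cx) * (k - cy) + cy * (t - cx) = ((q * N - (2 * p + (p^2 + 1) * t)) * (k * N + k * (1 - p^2)) - k * (1 - p^2) * (t * N - (2 * p + (p^2 + 1) * t))) / N^2"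
    unfolding cx_def cy_def using N(2) by (simp add: field_simps power2_eq_square)
  also have "(q * N - (2 * p + (p^2 + 1) * t)) * (k * N + k * (1 - p^2)) - k * (1 - p^2) * (t * N - (2 * p + (p^2 + 1) * t)) = 0"
  proof -
    have tq: "t * (1 - p * q) = q - p" using t pq by simp
    show ?thesis unfolding N(1) using tq by algebra
  qed
  finally show ?thesis by simp
qed

lemma B1:
  fixes r A :: real assumes r: "0 < r" "r < 1" and A: "A > 1" and h: "(1 + r) / (1 - r) > A^2"
  shows "r > (A^2 - 1) / (A^2 + 1)"
proof -
  have "1 + r > A^2 * (1 - r)" using h r by (simp add: field_simps)
  then have "r * (A^2 + 1) > A^2 - 1" by (simp add: algebra_simps)
  moreover have "A^2 + 1 > 0" using zero_le_power2[of A] by linarith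
  ultimately show ?thesis by (simp add: field_simps)
qed

lemma B2g:
  fixes U D :: real assumes D: "D \<noteq> 0"
  shows "((U / D)^2 - 1) / ((U / D)^2 + 1) = (U^2 - D^2) / (U^2 + D^2)"
proof -
  have p: "U^2 + D^2 > 0" using D by (simp add: add_nonneg_pos)
  have 1: "(U / D)^2 - 1 = (U^2 - D^2) / D^2" using D by (simp add: power_divide diff_divide_distrib)
  have 2: "(U / D)^2 + 1 = (U^2 + D^2) / D^2" using D by (simp add: power_divide add_divide_distrib)
  show ?thesis unfolding 1 2 using D p by simp
qed

lemma B2:
  fixes E :: real assumes E: "E > 1"
  shows "(((E + 1) / (E - 1))^2 - 1) / (((E + 1) / (E - 1))^2 + 1) = 2 * E / (E^2 + 1)"
proof -
  have e1: "E - 1 \<noteq> 0" using E by simp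
  have a: "(E + 1)^2 - (E - 1)^2 = 2 * (2 * E)" by (simp add: power2_eq_square algebra_simps)
  have b: "(E + 1)^2 + (E - 1)^2 = 2 * (E^2 + 1)" by (simp add: power2_eq_square algebra_simps)
  have c: "2 * (2 * E) / (2 * (E^2 + 1)) = 2 * E / (E^2 + 1)" by (rule mult_divide_mult_cancel_left) simp
  show ?thesis unfolding B2g[OF e1] a b c by simp
qed

lemma B3gen:
  fixes num den :: real assumes "den \<noteq> 0" "num + den \<noteq> 0"
  shows "4 * (num / den) / (num / den + 1)^2 = 4 * num * den / (num + den)^2"
  using assms by (simp add: field_simps power2_eq_square)

lemma B3:
  fixes p q :: real assumes p: "-1 < p" "p < 1" and q: "-1 < q" "q < 1"
  defines "X \<equiv> (1 + q) * (1 - p) / ((1 + p) * (1 - q))"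
  shows "4 * X / (X + 1)^2 = 1 - ((q - p) / (1 - p * q))^2"
proof -
  have a: "1 + p > 0" "1 - q > 0" "1 - p > 0" "1 + q > 0" using p q by auto
  have pq: "1 - p * q > 0"
  proof -
    have "(1 - p) * (1 + q) + (1 + p) * (1 - q) > 0" using a by (simp add: add_pos_pos)
    then show ?thesis by (simp add: algebra_simps)
  qed
  have s: "(1 + q) * (1 - p) + (1 + p) * (1 - q) = 2 * (1 - p * q)" by (simp add: algebra_simps)
  have d: "(1 + p) * (1 - q) \<noteq> 0" using a by simp
  have "4 * X / (X + 1)^2 = 4 * ((1 + q) * (1 - p)) * ((1 + p) * (1 - q)) / (2 * (1 - p * q))^2"
    unfolding X_def using B3gen[OF d] s pq by simp
  also have "\<dots> = ((1 + q) * (1 - p)) * ((1 + p) * (1 - q)) / (1 - p * q)^2"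
  proof -
    have g: "\<And>a c :: real. 4 * a / (2 * c)^2 = a / c^2" by (simp add: power2_eq_square)
    show ?thesis using g[of "((1 + q) * (1 - p)) * ((1 + p) * (1 - q))" "1 - p * q"] by (simp add: mult.assoc)
  qed
  also have "((1 + q) * (1 - p)) * ((1 + p) * (1 - q)) = (1 - p^2) * (1 - q^2)"
    by (simp add: power2_eq_square algebra_simps)
  also have "(1 - p^2) * (1 - q^2) = (1 - p * q)^2 - (q - p)^2"
    by (simp add: power2_eq_square algebra_simps)
  also have "((1 - p * q)^2 - (q - p)^2) / (1 - p * q)^2 = 1 - ((q - p) / (1 - p * q))^2"
  proof -
    have g2: "\<And>A B::real. A \<noteq> 0 \<Longrightarrow> (A^2 - B^2) / A^2 = 1 - (B / A)^2"
      by (simp add: power_divide diff_divide_distrib)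
    show ?thesis using g2[of "1 - p * q" "q - p"] pq by simp
  qed
  finally show ?thesis .
qed


lemma exp_half_ln: "X > 0 \<Longrightarrow> exp (ln X / 2) = sqrt X"
proof -
  assume X: "X > 0"
  have "X powr (1/2) = sqrt X" using X by (simp add: powr_half_sqrt)
  moreover have "X powr (1/2) = exp (1/2 * ln X)" using X by (simp add: powr_def)
  ultimately show ?thesis by (simp add: mult.commute)
qed

lemma CN:
  fixes p q r :: real
  assumes p: "-1 < p" "p < 1" and q: "-1 < q" "q < 1" and pq: "p < q" and r: "0 < r" "r < 1"
    and H: "HH (of_real p) (of_real q) (\<i> * of_real r)"
  shows "core (of_real p) (of_real q) (\<i> * of_real r)"
proof -
  have "(0::complex) \<in> affine hull {of_real p, of_real q}"
  proof -
    have "(0::complex) = of_real p + of_real (- p / (q - p)) * (of_real q - of_real p)"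
      using pq by (simp add: field_simps)
    then show ?thesis unfolding aff2 by blast
  qed
  then have h0: "dprime (\<i> * of_real r) 0 > Deltaprime (of_real p) (of_real q)"
    using H unfolding HH_def KD_iff by simp
  define LR where "LR = ln ((1 + r) / (1 - r))"
  have dR: "dprime (\<i> * of_real r) 0 = LR / 2"
  proof -
    have au: "cmod (- \<i>) = 1" "cmod \<i> = 1" "- \<i> \<noteq> \<i>" by (auto simp: complex_eq_iff)
    have e1: "\<i> * of_real r = - \<i> + of_real ((1 + r) / 2) * (\<i> - - \<i>)"
      by (simp add: complex_eq_iff field_simps)
    have e2: "(0::complex) = - \<i> + of_real (1 / 2) * (\<i> - - \<i>)"
      by (simp add: complex_eq_iff)
    have m1: "\<i> * of_real r \<in> affine hull {- \<i>, \<i>}" unfolding aff2 using e1 by blast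
    have m2: "0 \<in> affine hull {- \<i>, \<i>}" unfolding aff2 using e2 by blast
    have v: "vp (\<i> * of_real r) 0 (- \<i>) \<i>"
      unfolding vp_def S1_iff using au m1 m2 by simp
    have Rd: "cmod (\<i> * of_real r) < 1" using r by (simp add: norm_mult)
    have R0: "\<i> * of_real r \<noteq> 0" using r by simp
    have "dprime (\<i> * of_real r) 0 = EE (- \<i>) \<i> (\<i> * of_real r) 0"
      by (rule dprime_EE[OF Rd _ R0 v]) simp
    also have "\<dots> = \<bar>ln (1 / 2 * (1 - (1 + r) / 2) / ((1 + r) / 2 * (1 - 1 / 2)))\<bar> / 2"
      by (rule EE_param[OF au e1 e2]) (use r in auto)
    also have "1 / 2 * (1 - (1 + r) / 2) / ((1 + r) / 2 * (1 - 1 / 2)) = inverse ((1 + r) / (1 - r))"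
      using r by (simp add: field_simps)
    also have "\<bar>ln (inverse ((1 + r) / (1 - r)))\<bar> = LR"
    proof -
      have "(1 + r) / (1 - r) > 1" using r by (simp add: field_simps)
      then have "ln ((1 + r) / (1 - r)) > 0" by simp
      then show ?thesis unfolding LR_def using r by (subst ln_inverse) auto
    qed
    finally show ?thesis .
  qed
  define X where "X = (1 + q) * (1 - p) / ((1 + p) * (1 - q))"
  have X1: "X > 1"
  proof -
    have "(1 + q) * (1 - p) > (1 + p) * (1 - q)" using pq by (simp add: algebra_simps)
    moreover have "(1 + p) * (1 - q) > 0" using p q by simp
    ultimately show ?thesis unfolding X_def by simp
  qed
  have dPQ: "dprime (of_real p) (of_real q) = ln X / 2"
  proof -
    have au: "cmod (- 1 :: complex) = 1" "cmod (1::complex) = 1" "(- 1 :: complex) \<noteq> 1" by auto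
    have e1: "(of_real p :: complex) = - 1 + of_real ((1 + p) / 2) * (1 - - 1)"
      by (simp add: complex_eq_iff field_simps)
    have e2: "(of_real q :: complex) = - 1 + of_real ((1 + q) / 2) * (1 - - 1)"
      by (simp add: complex_eq_iff field_simps)
    have m1: "of_real p \<in> affine hull {- 1 :: complex, 1}" unfolding aff2 using e1 by blast
    have m2: "of_real q \<in> affine hull {- 1 :: complex, 1}" unfolding aff2 using e2 by blast
    have v: "vp (of_real p) (of_real q) (- 1) 1"
      unfolding vp_def S1_iff using au m1 m2 by simp
    have Pd: "cmod (of_real p :: complex) < 1" "cmod (of_real q :: complex) < 1" using p q by auto
    have ne: "(of_real p :: complex) \<noteq> of_real q" using pq by simp
    have "dprime (of_real p) (of_real q) = EE (- 1) 1 (of_real p) (of_real q)"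
      by (rule dprime_EE[OF Pd ne v])
    also have "\<dots> = \<bar>ln ((1 + q) / 2 * (1 - (1 + p) / 2) / ((1 + p) / 2 * (1 - (1 + q) / 2)))\<bar> / 2"
      by (rule EE_param[OF au e1 e2]) (use p q in auto)
    also have "(1 + q) / 2 * (1 - (1 + p) / 2) / ((1 + p) / 2 * (1 - (1 + q) / 2)) = X"
    proof -
      have a: "1 - (1 + p) / 2 = (1 - p) / 2" "1 - (1 + q) / 2 = (1 - q) / 2" by (simp_all add: field_simps)
      have g: "\<And>a b c d::real. a / 2 * (b / 2) / (c / 2 * (d / 2)) = (a * b) / (c * d)"
      proof -
        fix a b c d :: real
        have "a / 2 * (b / 2) = (a * b) / 4" "c / 2 * (d / 2) = (c * d) / 4" by simp_all
        then show "a / 2 * (b / 2) / (c / 2 * (d / 2)) = (a * b) / (c * d)" by simp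
      qed
      show ?thesis unfolding a g X_def by simp
    qed
    also have "\<bar>ln X\<bar> = ln X" using X1 by simp
    finally show ?thesis .
  qed
  define E where "E = sqrt X"
  have E1: "E > 1" unfolding E_def using X1 by simp
  have E2: "E^2 = X" unfolding E_def using X1 by simp
  have DP: "Deltaprime (of_real p) (of_real q) = ln ((E + 1) / (E - 1))"
    unfolding Deltaprime_def dPQ E_def using exp_half_ln X1 by simp
  define A where "A = (E + 1) / (E - 1)"
  have A1: "A > 1" unfolding A_def using E1 by (simp add: field_simps)
  have "LR / 2 > ln A" using h0 dR DP A_def by simp
  then have "ln ((1 + r) / (1 - r)) > ln (A^2)" unfolding LR_def using A1 by (simp add: ln_realpow)
  then have "(1 + r) / (1 - r) > A^2" using A1 r by (subst (asm) ln_less_cancel_iff) auto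
  then have "r > (A^2 - 1) / (A^2 + 1)" by (rule B1[OF r A1])
  then have rk: "r > 2 * E / (E^2 + 1)" unfolding A_def using B2[OF E1] by simp
  define k where "k = 2 * E / (E^2 + 1)"
  define t where "t = (q - p) / (1 - p * q)"
  have pq1: "1 - p * q > 0"
  proof -
    have "(1 - p) * (1 + q) + (1 + p) * (1 - q) > 0" using p q by (simp add: add_pos_pos)
    then show ?thesis by (simp add: algebra_simps)
  qed
  have kpos: "k > 0" unfolding k_def using E1 by (simp add: add_pos_nonneg)
  have tpos: "t > 0" unfolding t_def using pq pq1 by simp
  have k2: "k^2 = 1 - t^2"
  proof -
    have "k^2 = 4 * X / (X + 1)^2" unfolding k_def E2[symmetric] by (simp add: power_divide power_mult_distrib)
    also have "\<dots> = 1 - t^2" unfolding X_def t_def by (rule B3[OF p q])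
    finally show ?thesis .
  qed
  have t1: "\<bar>t\<bar> < 1"
  proof -
    have "t^2 < 1" using k2 kpos by (smt (verit) zero_less_power2)
    then show ?thesis by (simp add: abs_square_less_1)
  qed
  define N where "N = 1 + 2 * p * t + p^2"
  have Np: "N > 0" unfolding N_def by (rule N_pos) (use p t1 in auto)
  define cx where "cx = (2 * p + (p^2 + 1) * t) / N"
  define cy where "cy = - k * (1 - p^2) / N"
  define c where "c = Complex cx cy"
  define v1 where "v1 = Complex t k"
  define v2 where "v2 = Complex (- t) k"
  have cu: "cmod c = 1" unfolding c_def unit_iff using A2[OF N_def _ k2] Np cx_def cy_def by simp
  have v1u: "cmod v1 = 1" unfolding v1_def unit_iff using k2 by simp
  have v2u: "cmod v2 = 1" unfolding v2_def unit_iff using k2 by simp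
  have p1: "1 - p^2 > 0" using p by (simp add: abs_square_less_1)
  have cyn: "cy < 0" unfolding cy_def using kpos p1 Np by (simp add: divide_neg_pos mult_pos_pos)
  have pd: "cmod (of_real p :: complex) < 1" and qd: "cmod (of_real q :: complex) < 1" using p q by auto
  have sP: "sec (of_real p) c = v2"
  proof (rule sec_unique[OF pd cu v2u, symmetric])
    show "v2 \<noteq> c" using cyn kpos unfolding v2_def c_def by auto
    have a3: "(p - cx) * (k - cy) - cy * (t + cx) = 0"
      using A3[OF N_def _ k2] Np unfolding cx_def cy_def by simp
    have "cross (of_real p - c) (v2 - c) = (p - cx) * (k - cy) - cy * (t + cx)"
      unfolding cross_alt c_def v2_def by (simp add: algebra_simps)
    then show "cross (of_real p - c) (v2 - c) = 0" using a3 by simp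
  qed
  have sQ: "sec (of_real q) c = v1"
  proof (rule sec_unique[OF qd cu v1u, symmetric])
    show "v1 \<noteq> c" using cyn kpos unfolding v1_def c_def by auto
    have a4: "(q - cx) * (k - cy) + cy * (t - cx) = 0"
      using A4[OF N_def _ k2 t_def] Np pq1 unfolding cx_def cy_def by simp
    have "cross (of_real q - c) (v1 - c) = (q - cx) * (k - cy) + cy * (t - cx)"
      unfolding cross_alt c_def v1_def by (simp add: algebra_simps)
    then show "cross (of_real q - c) (v1 - c) = 0" using a4 by simp
  qed
  have o1: "cross (of_real q - of_real p) (c - of_real p) < 0"
    unfolding cross_alt c_def using pq cyn by (simp add: mult_pos_neg)
  have o2: "cross (sec (of_real p) c - sec (of_real q) c) (\<i> * of_real r - sec (of_real q) c) < 0"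
    unfolding sP sQ cross_alt v1_def v2_def using tpos rk k_def by (simp add: mult_pos_pos)
  show ?thesis unfolding core_def using cu o1 o2 by blast
qed



lemma kmap_neg: "kmap (\<lambda>z. (- 1) * z)" by (rule kmap_rot) simp

lemma step5:
  assumes g: "good P Q R" and i: "Im P = 0" "Im Q = 0" "Re R = 0"
  shows "core P Q R"
proof -
  define a where "a = Re P"
  define b where "b = Re Q"
  define rr where "rr = Im R"
  have P: "P = of_real a" using i a_def by (simp add: complex_eq_iff)
  have Q: "Q = of_real b" using i b_def by (simp add: complex_eq_iff)
  have R: "R = \<i> * of_real rr" using i rr_def by (simp add: complex_eq_iff)
  have gd: "cmod P < 1" "cmod Q < 1" "cmod R < 1" "cross (Q - P) (R - P) > 0" "HH P Q R"
    using g unfolding good_def by auto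
  have a1: "-1 < a" "a < 1" using gd(1) P by auto
  have b1: "-1 < b" "b < 1" using gd(2) Q by auto
  have r1: "\<bar>rr\<bar> < 1" using gd(3) R by (simp add: norm_mult)
  have o: "(b - a) * rr > 0" using gd(4) P Q R by (simp add: cross_alt)
  show ?thesis
  proof (cases "a < b")
    case True
    then have "rr > 0" using o by (simp add: zero_less_mult_iff)
    then have "core (of_real a) (of_real b) (\<i> * of_real rr)"
      using CN[OF a1 b1 True _ _] r1 gd(5) P Q R by simp
    then show ?thesis using P Q R by simp
  next
    case False
    then have ba: "b < a" using o by (cases "a = b") auto
    then have rn: "rr < 0" using o by (simp add: zero_less_mult_iff)
    have g2: "good ((- 1) * P) ((- 1) * Q) ((- 1) * R)" by (rule transfer(1)[OF kmap_neg g])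
    have "core (of_real (- a)) (of_real (- b)) (\<i> * of_real (- rr))"
      using CN[of "- a" "- b" "- rr"] a1 b1 ba rn r1 g2 P Q R unfolding good_def by simp
    then have "core ((- 1) * P) ((- 1) * Q) ((- 1) * R)" using P Q R by simp
    then show ?thesis by (rule transfer(2)[OF kmap_neg g])
  qed
qed

lemma step4:
  assumes g: "good P Q R" and i: "Im P = 0" "Im Q = 0"
  shows "core P Q R"
proof -
  have R: "cmod R < 1" using g good_def by auto
  define s where "s = - Re R"
  have s: "\<bar>s\<bar> < 1" unfolding s_def using R abs_Re_le_cmod[of R] by linarith
  have K: "kmap (trh s)" by (rule kmap_trh[OF s])
  have g2: "good (trh s P) (trh s Q) (trh s R)" by (rule transfer(1)[OF K g])
  have "Im (trh s P) = 0" "Im (trh s Q) = 0" "Re (trh s R) = 0" using i by (simp_all add: trh_def s_def)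
  then have "core (trh s P) (trh s Q) (trh s R)" by (rule step5[OF g2])
  then show ?thesis by (rule transfer(2)[OF K g])
qed

lemma step3:
  assumes g: "good P Q R" and i: "Re P = 0" "Re Q = 0"
  shows "core P Q R"
proof -
  have K: "kmap (\<lambda>z. (- \<i>) * z)" by (rule kmap_rot) simp
  have g2: "good ((- \<i>) * P) ((- \<i>) * Q) ((- \<i>) * R)" by (rule transfer(1)[OF K g])
  have "Im ((- \<i>) * P) = 0" "Im ((- \<i>) * Q) = 0" using i by simp_all
  then have "core ((- \<i>) * P) ((- \<i>) * Q) ((- \<i>) * R)" by (rule step4[OF g2])
  then show ?thesis by (rule transfer(2)[OF K g])
qed

lemma step2:
  assumes g: "good P Q R" and i: "Re P = Re Q"
  shows "core P Q R"
proof -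
  have Pd: "cmod P < 1" using g good_def by auto
  define s where "s = - Re P"
  have s: "\<bar>s\<bar> < 1" unfolding s_def using Pd abs_Re_le_cmod[of P] by linarith
  have K: "kmap (trh s)" by (rule kmap_trh[OF s])
  have g2: "good (trh s P) (trh s Q) (trh s R)" by (rule transfer(1)[OF K g])
  have "Re (trh s P) = 0" "Re (trh s Q) = 0" using i by (simp_all add: trh_def s_def)
  then have "core (trh s P) (trh s Q) (trh s R)" by (rule step3[OF g2])
  then show ?thesis by (rule transfer(2)[OF K g])
qed

lemma step1:
  assumes g: "good P Q R"
  shows "core P Q R"
proof -
  have PQ: "P \<noteq> Q" by (rule good_ne[OF g])
  define d where "d = Q - P"
  have d0: "d \<noteq> 0" using PQ d_def by simp
  define w where "w = \<i> * cnj d / of_real (cmod d)"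
  have wu: "cmod w = 1" unfolding w_def using d0 by (simp add: norm_mult norm_divide)
  have K: "kmap (\<lambda>z. w * z)" by (rule kmap_rot[OF wu])
  have g2: "good (w * P) (w * Q) (w * R)" by (rule transfer(1)[OF K g])
  have "w * Q - w * P = w * d" by (simp add: d_def right_diff_distrib)
  also have "w * d = \<i> * (cnj d * d / of_real (cmod d))" unfolding w_def by (simp add: mult_ac)
  also have "cnj d * d = of_real ((cmod d)^2)" by (metis complex_norm_square mult.commute)
  also have "of_real ((cmod d)^2) / of_real (cmod d) = (of_real ((cmod d)^2 / cmod d) :: complex)" by simp
  finally have "Re (w * Q - w * P) = 0" by simp
  then have "Re (w * P) = Re (w * Q)" by simp
  then have "core (w * P) (w * Q) (w * R)" by (rule step2[OF g2])
  then show ?thesis by (rule transfer(2)[OF K g])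
qed



lemma cross_zero_collinear:
  assumes "cross (Q - P) (R - P) = 0"
  shows "collinear {P, Q, R}"
proof (cases "P = Q")
  case True then show ?thesis by (simp add: collinear_2)
next
  case False
  then have "R \<in> affine hull {P, Q}" using aff_cross assms by blast
  then obtain l where R: "R = P + of_real l * (Q - P)" unfolding aff2 by blast
  have "R - Q = (1 - l) *\<^sub>R (P - Q)" unfolding R by (simp add: scaleR_conv_of_real algebra_simps)
  then have "collinear {0, P - Q, R - Q}" unfolding collinear_lemma by blast
  then show ?thesis by (subst collinear_3) auto
qed

lemma dprime_nonneg: "dprime a b \<ge> 0"
  unfolding dprime_def by (cases "chord_ends a b") simp

lemma final_core:
  assumes P: "cmod P < 1" and Q: "cmod Q < 1" and R: "cmod R < 1" and o: "cross (Q - P) (R - P) > 0"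
    and d: "delta P Q R > Deltaprime P Q"
  shows "core P Q R"
proof -
  have "HH P Q R" unfolding HH_def
  proof (intro allI impI)
    fix S assume S: "S \<in> KD \<and> S \<in> affine hull {P, Q}"
    have bdd: "bdd_below {dprime R S | S. S \<in> KD \<and> S \<in> affine hull {P, Q}}"
      by (rule bdd_belowI[of _ 0]) (auto simp: dprime_nonneg)
    have "delta P Q R \<le> dprime R S" unfolding delta_def
      by (rule cInf_lower[OF _ bdd]) (use S in blast)
    then show "dprime R S > Deltaprime P Q" using d by simp
  qed
  then have "good P Q R" unfolding good_def using P Q R o by blast
  then show ?thesis by (rule step1)
qed

theorem lemma4p3:
  fixes P Q R :: complex
  assumes "P \<in> KD" and "Q \<in> KD" and "R \<in> KD"
    and "\<not> collinear {P, Q, R}"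
    and "delta P Q R > Deltaprime P Q"
  shows "\<exists>w\<in>S1. \<forall>w'. circ w' = w \<longrightarrow>
           (psi_lift (convex hull {P, Q, R}) ^^ 3) w' < w' + 1"
proof -
  have P: "cmod P < 1" and Q: "cmod Q < 1" and R: "cmod R < 1" using assms(1-3) KD_iff by auto
  have nz: "cross (Q - P) (R - P) \<noteq> 0" using assms(4) cross_zero_collinear by blast
  have PQ: "P \<noteq> Q" using nz by (auto simp: cross_alt)
  obtain P' Q' where sw: "{P', Q', R} = {P, Q, R}" and P': "cmod P' < 1" and Q': "cmod Q' < 1"
    and cr: "core P' Q' R"
  proof (cases "cross (Q - P) (R - P) > 0")
    case True
    then show ?thesis using that[of P Q] final_core[OF P Q R True assms(5)] P Q by blast
  next
    case False
    then have o: "cross (P - Q) (R - Q) > 0" using nz by (simp add: cross_alt algebra_simps)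
    have aff: "affine hull {Q, P} = affine hull {P, Q}" by (simp add: insert_commute)
    have "delta Q P R = delta P Q R" unfolding delta_def aff ..
    moreover have "Deltaprime Q P = Deltaprime P Q" unfolding Deltaprime_def using dprime_sym[OF P Q PQ] by simp
    ultimately have "delta Q P R > Deltaprime Q P" using assms(5) by simp
    then have "core Q P R" by (rule final_core[OF Q P R o])
    moreover have "{Q, P, R} = {P, Q, R}" by auto
    ultimately show ?thesis using that[of Q P] P Q by blast
  qed
  obtain c where c: "cmod c = 1" "cross (Q' - P') (c - P') < 0"
    "cross (sec P' c - sec Q' c) (R - sec Q' c) < 0" using cr unfolding core_def by blast
  have L: "psi_lift (convex hull {P, Q, R}) = Fm P' Q' R"
    using psi_lift_eq[OF P' Q' R] sw by simp
  show ?thesis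
  proof (intro bexI[of _ c] allI impI)
    fix x assume "circ x = c"
    then show "(psi_lift (convex hull {P, Q, R}) ^^ 3) x < x + 1"
      unfolding L by (rule chain[OF P' Q' R c(1) c(2) c(3)])
  next
    show "c \<in> S1" using c S1_iff by simp
  qed
qed

end
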